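(* For any concept class $\mathcal C$ of functions $X\to\{-1,1\}$ (with $X$ finite), distribution $\mathcal D$ over $X$, and $\delta_{\mathrm{additional}}>0$, if an algorithm $A$ using $n$ samples $(\varepsilon,\delta)$-learns $\mathcal C$ over $\mathcal D$ with $\eta$-TV noise, then $A':=A\circ\Phi_{m\to n}$, where $$m:=O\!\left(\frac{n^4\log(2|X|)^2}{\delta_{\mathrm{additional}}^4}\right),$$ $(\varepsilon,\delta+\delta_{\mathrm{additional}})$-learns $\mathcal C$ over $\mathcal D$ with $\eta$-fixed-rate nasty noise.
   Context: An algorithm $(\varepsilon,\delta)$-learns $\mathcal C$ over $\mathcal D$ in a noise model if for every $c\in\mathcal C$ and every adversary strategy, with probability at least $1-\delta$ the output $h$ satisfies $\Pr_{x\sim\mathcal D}[h(x)\ne c(x)]\le\varepsilon$. $\mathcal D_c$ is the distribution of $(x,c(x))$, $x\sim\mathcal D$. $\eta$-TV noise: the adversary chooses any distribution $\mathcal D'$ on $X\times\{-1,1\}$ with $d_{\mathrm{TV}}(\mathcal D_c,\mathcal D')\le\eta$, and the sample consists of i.i.d. draws from $\mathcal D'$. $\eta$-fixed-rate nasty noise (with $m$ examples): a clean sample of $m$ i.i.d. examples from $\mathcal D_c$ is drawn; then an arbitrary (adversarially chosen, depending on the sample) subset of exactly $\lfloor\eta m\rfloor$ examples is replaced by arbitrary pairs in $X\times\{-1,1\}$. $\Phi_{m\to n}$ is the randomized map taking a sequence of $m$ examples to a uniformly random subsample of $n$ of them drawn without replacement; $A\circ\Phi_{m\to n}$ runs $A$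 on this subsample. *)

theory Defs
  imports "HOL-Probability.Probability"
begin

text \<open>Labels in {-1,1} are encoded as bool (True = 1, False = -1).
  The finite domain X is a finite set of naturals (any finite domain is isomorphic to one),
  so that the hidden constant of the O(.) bound can be quantified uniformly over all X.\<close>

type_synonym example = "nat \<times> bool"
type_synonym hypothesis = "nat \<Rightarrow> bool"
type_synonym algorithm = "example list \<Rightarrow> hypothesis pmf"

definition err :: "nat pmf \<Rightarrow> hypothesis \<Rightarrow> hypothesis \<Rightarrow> real" where
  "err D c h = measure_pmf.prob D {x. h x \<noteq> c x}"

definition labeled :: "nat pmf \<Rightarrow> hypothesis \<Rightarrow> example pmf" where
  "labeled D c = map_pmf (\<lambda>x. (x, c x)) D"

definition tv_dist :: "'a pmf \<Rightarrow> 'a pmf \<Rightarrow> real" where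
  "tv_dist p q = (SUP A. \<bar>measure_pmf.prob p A - measure_pmf.prob q A\<bar>)"

definition success_prob :: "nat pmf \<Rightarrow> hypothesis \<Rightarrow> real \<Rightarrow> example list pmf \<Rightarrow> algorithm \<Rightarrow> real" where
  "success_prob D c \<epsilon> S A = measure_pmf.prob (bind_pmf S A) {h. err D c h \<le> \<epsilon>}"

definition TV_learns :: "nat set \<Rightarrow> hypothesis set \<Rightarrow> nat pmf \<Rightarrow> nat \<Rightarrow> algorithm \<Rightarrow> real \<Rightarrow> real \<Rightarrow> real \<Rightarrow> bool" where
  "TV_learns X C D n A \<epsilon> \<delta> \<eta> \<longleftrightarrow>
     (\<forall>c\<in>C. \<forall>D' :: example pmf. set_pmf D' \<subseteq> X \<times> UNIV \<longrightarrow> tv_dist (labeled D c) D' \<le> \<eta> \<longrightarrow>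
        success_prob D c \<epsilon> (replicate_pmf n D') A \<ge> 1 - \<delta>)"

definition nasty_adversary :: "nat set \<Rightarrow> nat pmf \<Rightarrow> hypothesis \<Rightarrow> real \<Rightarrow> nat \<Rightarrow> (example list \<Rightarrow> example list) \<Rightarrow> bool" where
  "nasty_adversary X D c \<eta> m adv \<longleftrightarrow>
     (\<forall>S \<in> set_pmf (replicate_pmf m (labeled D c)).
        length (adv S) = m \<and> set (adv S) \<subseteq> X \<times> UNIV \<and>
        (\<exists>I \<subseteq> {..<m}. card I = nat \<lfloor>\<eta> * real m\<rfloor> \<and> (\<forall>i<m. i \<notin> I \<longrightarrow> adv S ! i = S ! i)))"

definition nasty_learns :: "nat set \<Rightarrow> hypothesis set \<Rightarrow> nat pmf \<Rightarrow> nat \<Rightarrow> algorithm \<Rightarrow> real \<Rightarrow> real \<Rightarrow> real \<Rightarrow> bool" where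
  "nasty_learns X C D m A \<epsilon> \<delta> \<eta> \<longleftrightarrow>
     (\<forall>c\<in>C. \<forall>adv. nasty_adversary X D c \<eta> m adv \<longrightarrow>
        success_prob D c \<epsilon> (map_pmf adv (replicate_pmf m (labeled D c))) A \<ge> 1 - \<delta>)"

definition subsample :: "nat \<Rightarrow> 'a list \<Rightarrow> 'a list pmf" where
  "subsample n S = map_pmf (\<lambda>is. map (\<lambda>i. S ! i) is)
     (pmf_of_set {is. distinct is \<and> length is = n \<and> set is \<subseteq> {..<length S}})"

definition compose_subsample :: "algorithm \<Rightarrow> nat \<Rightarrow> algorithm" where
  "compose_subsample A n = (\<lambda>S. bind_pmf (subsample n S) A)"

end

theory Submission
  imports Defs
begin

definition ent :: "'a pmf \<Rightarrow> real" where
  "ent \<mu> = (\<Sum>x\<in>set_pmf \<mu>. - (pmf \<mu> x * ln (pmf \<mu> x)))"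

definition KL :: "'a pmf \<Rightarrow> 'a pmf \<Rightarrow> real" where
  "KL P Q = (\<Sum>x\<in>set_pmf P. pmf P x * ln (pmf P x / pmf Q x))"

lemma expect_sum:
  assumes "finite (set_pmf M)"
  shows "measure_pmf.expectation M f = (\<Sum>x\<in>set_pmf M. pmf M x * f x)"
  using integral_measure_pmf_real[OF assms, of M f] by (simp add: mult.commute)

lemma sum_marg:
  assumes "finite (set_pmf \<nu>)"
  shows "(\<Sum>z\<in>set_pmf \<nu>. pmf \<nu> z * \<phi> (f z)) = (\<Sum>a\<in>set_pmf (map_pmf f \<nu>). pmf (map_pmf f \<nu>) a * \<phi> a)"
proof -
  have fin2: "finite (set_pmf (map_pmf f \<nu>))" using assms by simp
  have "(\<Sum>z\<in>set_pmf \<nu>. pmf \<nu> z * \<phi> (f z)) = measure_pmf.expectation \<nu> (\<lambda>z. \<phi> (f z))"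
    using expect_sum[OF assms] by simp
  also have "\<dots> = measure_pmf.expectation (map_pmf f \<nu>) \<phi>" by simp
  also have "\<dots> = (\<Sum>a\<in>set_pmf (map_pmf f \<nu>). pmf (map_pmf f \<nu>) a * \<phi> a)"
    using expect_sum[OF fin2] by simp
  finally show ?thesis .
qed

lemma ent_nonneg: "0 \<le> ent \<mu>"
  unfolding ent_def
proof (rule sum_nonneg)
  fix x assume "x \<in> set_pmf \<mu>"
  then have "0 < pmf \<mu> x" "pmf \<mu> x \<le> 1" by (auto simp: pmf_positive pmf_le_1)
  then have "ln (pmf \<mu> x) \<le> 0" by simp
  then show "0 \<le> - (pmf \<mu> x * ln (pmf \<mu> x))" using \<open>0 < pmf \<mu> x\<close>
    by (simp add: mult_nonneg_nonpos)
qed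

lemma ent_map_inj:
  assumes "inj_on f (set_pmf \<mu>)"
  shows "ent (map_pmf f \<mu>) = ent \<mu>"
  unfolding ent_def set_map_pmf
  by (subst sum.reindex[OF assms]) (auto intro!: sum.cong simp: pmf_map_inj[OF assms])

lemma ent_le_ln_card:
  assumes "finite A" "set_pmf \<mu> \<subseteq> A"
  shows "ent \<mu> \<le> ln (card A)"
proof -
  have fin: "finite (set_pmf \<mu>)" using assms finite_subset by blast
  have ne: "set_pmf \<mu> \<noteq> {}" by (simp add: set_pmf_not_empty)
  have cA: "card A > 0" using assms ne by (metis card_gt_0_iff subset_empty)
  have s1: "(\<Sum>x\<in>set_pmf \<mu>. pmf \<mu> x) = 1" using sum_pmf_eq_1[OF fin] by simp
  have pos: "\<And>x. x \<in> set_pmf \<mu> \<Longrightarrow> 0 < pmf \<mu> x" by (simp add: pmf_positive)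
  have "ent \<mu> - ln (card A) = (\<Sum>x\<in>set_pmf \<mu>. pmf \<mu> x * ln (1 / (pmf \<mu> x * card A)))"
  proof -
    have "(\<Sum>x\<in>set_pmf \<mu>. pmf \<mu> x * ln (1 / (pmf \<mu> x * card A)))
        = (\<Sum>x\<in>set_pmf \<mu>. - (pmf \<mu> x * ln (pmf \<mu> x)) - pmf \<mu> x * ln (card A))"
      using pos cA by (intro sum.cong) (auto simp: ln_div ln_mult algebra_simps)
    also have "\<dots> = ent \<mu> - ln (card A)"
      by (simp add: ent_def sum_subtractf flip: sum_distrib_right add: s1)
    finally show ?thesis by simp
  qed
  also have "\<dots> \<le> (\<Sum>x\<in>set_pmf \<mu>. pmf \<mu> x * (1 / (pmf \<mu> x * card A) - 1))"
    using pos cA by (intro sum_mono mult_left_mono ln_le_minus_one) (auto intro: less_imp_le)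
  also have "\<dots> = (\<Sum>x\<in>set_pmf \<mu>. 1 / card A - pmf \<mu> x)"
  proof (rule sum.cong[OF refl])
    fix x assume "x \<in> set_pmf \<mu>"
    then have "0 < pmf \<mu> x" by (rule pos)
    then show "pmf \<mu> x * (1 / (pmf \<mu> x * card A) - 1) = 1 / card A - pmf \<mu> x"
      using cA by (simp add: field_simps)
  qed
  also have "\<dots> = card (set_pmf \<mu>) / card A - 1"
    by (simp add: sum_subtractf s1)
  also have "\<dots> \<le> 0"
    using cA card_mono[OF assms] by (simp add: divide_le_eq_1)
  finally show ?thesis by simp
qed

lemma KL_term:
  fixes P Q :: real
  assumes "0 < P" "0 < Q"
  shows "2 * P - 2 * sqrt (P * Q) \<le> P * ln (P / Q)"
proof -
  define r where "r = sqrt (Q / P)"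
  have r: "0 < r" using assms by (simp add: r_def)
  have "ln r \<le> r - 1" using ln_le_minus_one[OF r] .
  moreover have "ln (P / Q) = - 2 * ln r"
    using assms by (simp add: r_def ln_sqrt ln_div)
  ultimately have "2 - 2 * r \<le> ln (P / Q)" by simp
  then have "P * (2 - 2 * r) \<le> P * ln (P / Q)" using assms by (simp add: mult_left_mono)
  moreover have "P * r = sqrt (P * Q)"
    using assms by (simp add: r_def real_sqrt_divide real_sqrt_mult field_simps)
  ultimately show ?thesis by (simp add: algebra_simps)
qed

lemma KL_hell:
  assumes fin: "finite (set_pmf Q)" and sub: "set_pmf P \<subseteq> set_pmf Q"
  shows "(\<Sum>x\<in>set_pmf Q. (sqrt (pmf P x) - sqrt (pmf Q x))\<^sup>2) \<le> KL P Q"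
proof -
  have finP: "finite (set_pmf P)" using fin sub finite_subset by blast
  have sP: "(\<Sum>x\<in>set_pmf Q. pmf P x) = 1" using sum_pmf_eq_1[OF fin sub] .
  have sP': "(\<Sum>x\<in>set_pmf P. pmf P x) = 1" using sum_pmf_eq_1[OF finP] by simp
  have sQ: "(\<Sum>x\<in>set_pmf Q. pmf Q x) = 1" using sum_pmf_eq_1[OF fin] by simp
  have eqs: "(\<Sum>x\<in>set_pmf Q. sqrt (pmf P x * pmf Q x)) = (\<Sum>x\<in>set_pmf P. sqrt (pmf P x * pmf Q x))"
    using fin sub by (intro sum.mono_neutral_right) (auto simp: set_pmf_eq)
  have "(\<Sum>x\<in>set_pmf Q. (sqrt (pmf P x) - sqrt (pmf Q x))\<^sup>2)
      = (\<Sum>x\<in>set_pmf Q. pmf P x + pmf Q x - 2 * sqrt (pmf P x * pmf Q x))"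
    by (intro sum.cong) (auto simp: power2_diff real_sqrt_mult)
  also have "\<dots> = 2 - 2 * (\<Sum>x\<in>set_pmf P. sqrt (pmf P x * pmf Q x))"
    by (simp add: sum_subtractf sum.distrib sP sQ eqs flip: sum_distrib_left)
  also have "\<dots> = (\<Sum>x\<in>set_pmf P. 2 * pmf P x - 2 * sqrt (pmf P x * pmf Q x))"
    by (simp add: sum_subtractf sP' flip: sum_distrib_left)
  also have "\<dots> \<le> KL P Q"
    unfolding KL_def
    using sub by (intro sum_mono KL_term) (auto simp: pmf_positive)
  finally show ?thesis .
qed

lemma KL_nonneg:
  assumes "finite (set_pmf Q)" "set_pmf P \<subseteq> set_pmf Q"
  shows "0 \<le> KL P Q"
  using KL_hell[OF assms] by (meson order.trans sum_nonneg zero_le_power2)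

lemma KL_test:
  assumes fin: "finite (set_pmf Q)" and sub: "set_pmf P \<subseteq> set_pmf Q"
    and h0: "\<And>x. 0 \<le> h x" and h1: "\<And>x. h x \<le> 1"
  shows "measure_pmf.expectation P h - measure_pmf.expectation Q h \<le> sqrt (KL P Q)"
proof -
  let ?F = "set_pmf Q"
  have EP: "measure_pmf.expectation P h = (\<Sum>x\<in>?F. pmf P x * h x)"
    using integral_measure_pmf_real[OF fin, of P h] sub by (auto simp: mult.commute)
  have EQ: "measure_pmf.expectation Q h = (\<Sum>x\<in>?F. pmf Q x * h x)"
    using expect_sum[OF fin] by simp
  have sP: "(\<Sum>x\<in>?F. pmf P x) = 1" using sum_pmf_eq_1[OF fin sub] .
  have sQ: "(\<Sum>x\<in>?F. pmf Q x) = 1" using sum_pmf_eq_1[OF fin] by simp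
  have "(\<Sum>x\<in>?F. pmf P x * h x) - (\<Sum>x\<in>?F. pmf Q x * h x)
      = (\<Sum>x\<in>?F. (pmf P x - pmf Q x) * (h x - 1/2)) + (1/2) * ((\<Sum>x\<in>?F. pmf P x) - (\<Sum>x\<in>?F. pmf Q x))"
    by (simp add: algebra_simps sum_subtractf sum.distrib sum_distrib_left sum_divide_distrib)
  also have "\<dots> = (\<Sum>x\<in>?F. (pmf P x - pmf Q x) * (h x - 1/2))" using sP sQ by simp
  also have "\<dots> \<le> (\<Sum>x\<in>?F. \<bar>pmf P x - pmf Q x\<bar> * (1/2))"
  proof (rule sum_mono)
    fix x
    have "\<bar>h x - 1/2\<bar> \<le> 1/2" using h0[of x] h1[of x] by linarith
    then have "(pmf P x - pmf Q x) * (h x - 1/2) \<le> \<bar>pmf P x - pmf Q x\<bar> * \<bar>h x - 1/2\<bar>"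
      by (metis abs_ge_self abs_mult)
    also have "\<dots> \<le> \<bar>pmf P x - pmf Q x\<bar> * (1/2)"
      using \<open>\<bar>h x - 1/2\<bar> \<le> 1/2\<close> by (intro mult_left_mono) auto
    finally show "(pmf P x - pmf Q x) * (h x - 1/2) \<le> \<bar>pmf P x - pmf Q x\<bar> * (1/2)" .
  qed
  also have "\<dots> = (1/2) * (\<Sum>x\<in>?F. \<bar>pmf P x - pmf Q x\<bar>)"
    by (simp add: sum_distrib_left mult.commute)
  also have "(\<Sum>x\<in>?F. \<bar>pmf P x - pmf Q x\<bar>) \<le> 2 * sqrt (KL P Q)"
  proof -
    let ?a = "\<lambda>x. \<bar>sqrt (pmf P x) - sqrt (pmf Q x)\<bar>"
    let ?b = "\<lambda>x. sqrt (pmf P x) + sqrt (pmf Q x)"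
    have ab: "\<And>x. \<bar>pmf P x - pmf Q x\<bar> = ?a x * ?b x"
    proof -
      fix x
      have "pmf P x - pmf Q x = (sqrt (pmf P x) - sqrt (pmf Q x)) * ?b x"
        by (simp add: algebra_simps)
      then show "\<bar>pmf P x - pmf Q x\<bar> = ?a x * ?b x"
        by (simp add: abs_mult)
    qed
    have cs: "(\<Sum>x\<in>?F. ?a x * ?b x)\<^sup>2 \<le> (\<Sum>x\<in>?F. (?a x)\<^sup>2) * (\<Sum>x\<in>?F. (?b x)\<^sup>2)"
      by (rule Cauchy_Schwarz_ineq_sum)
    have a2: "(\<Sum>x\<in>?F. (?a x)\<^sup>2) \<le> KL P Q"
      using KL_hell[OF fin sub] by simp
    have b2: "(\<Sum>x\<in>?F. (?b x)\<^sup>2) \<le> 4"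
    proof -
      have "(\<Sum>x\<in>?F. (?b x)\<^sup>2) \<le> (\<Sum>x\<in>?F. 2 * pmf P x + 2 * pmf Q x)"
      proof (rule sum_mono)
        fix x
        have "(?b x)\<^sup>2 \<le> 2 * (sqrt (pmf P x))\<^sup>2 + 2 * (sqrt (pmf Q x))\<^sup>2"
          by (smt (verit, best) power2_sum zero_le_power2 power2_diff)
        then show "(?b x)\<^sup>2 \<le> 2 * pmf P x + 2 * pmf Q x" by simp
      qed
      also have "\<dots> = 4" by (simp add: sum.distrib sP sQ flip: sum_distrib_left)
      finally show ?thesis .
    qed
    have "(\<Sum>x\<in>?F. ?a x * ?b x)\<^sup>2 \<le> KL P Q * 4"
      using cs a2 b2 by (meson order.trans mult_mono sum_nonneg zero_le_power2 KL_nonneg[OF fin sub])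
    then have "(\<Sum>x\<in>?F. ?a x * ?b x) \<le> sqrt (KL P Q * 4)"
      by (rule real_le_rsqrt)
    also have "\<dots> = 2 * sqrt (KL P Q)" by (simp add: real_sqrt_mult)
    finally show ?thesis using ab by simp
  qed
  finally show ?thesis using EP EQ by simp
qed

lemma pmf_bind_Pair:
  "pmf (bind_pmf M (\<lambda>c. map_pmf (Pair c) (K c))) (a, b) = pmf M a * pmf (K a) b"
proof -
  have eq: "\<And>c. pmf (map_pmf (Pair c) (K c)) (a, b) = (if c = a then pmf (K a) b else 0)"
  proof -
    fix c show "pmf (map_pmf (Pair c) (K c)) (a, b) = (if c = a then pmf (K a) b else 0)"
    proof (cases "c = a")
      case True
      then show ?thesis by (simp add: pmf_map_inj' inj_on_def)
    next
      case False
      then show ?thesis by (subst pmf_map_outside) auto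
    qed
  qed
  have "pmf (bind_pmf M (\<lambda>c. map_pmf (Pair c) (K c))) (a, b)
      = measure_pmf.expectation M (\<lambda>c. if c = a then pmf (K a) b else 0)"
    by (simp add: pmf_bind eq)
  also have "\<dots> = (\<Sum>c\<in>{a}. (if c = a then pmf (K a) b else 0) * pmf M c)"
    by (rule integral_measure_pmf_real) (auto split: if_splits)
  finally show ?thesis by simp
qed

lemma set_bind_Pair:
  "set_pmf (bind_pmf M (\<lambda>c. map_pmf (Pair c) (K c))) = Sigma (set_pmf M) (\<lambda>c. set_pmf (K c))"
  by (auto simp: set_bind_pmf)

lemma ent_bind_Pair:
  assumes fin: "finite (set_pmf M)" and finK: "\<And>c. c \<in> set_pmf M \<Longrightarrow> finite (set_pmf (K c))"
  shows "ent (bind_pmf M (\<lambda>c. map_pmf (Pair c) (K c))) = ent M + (\<Sum>c\<in>set_pmf M. pmf M c * ent (K c))"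
proof -
  let ?B = "bind_pmf M (\<lambda>c. map_pmf (Pair c) (K c))"
  have "ent ?B = (\<Sum>z\<in>Sigma (set_pmf M) (\<lambda>c. set_pmf (K c)). - (pmf ?B z * ln (pmf ?B z)))"
    unfolding ent_def set_bind_Pair ..
  also have "\<dots> = (\<Sum>c\<in>set_pmf M. \<Sum>x\<in>set_pmf (K c). - (pmf M c * pmf (K c) x * ln (pmf M c * pmf (K c) x)))"
    by (subst sum.Sigma[OF fin]) (auto simp: finK pmf_bind_Pair split_def intro!: sum.cong)
  also have "\<dots> = (\<Sum>c\<in>set_pmf M. - (pmf M c * ln (pmf M c)) + pmf M c * ent (K c))"
  proof (rule sum.cong[OF refl])
    fix c assume c: "c \<in> set_pmf M"
    have s1: "(\<Sum>x\<in>set_pmf (K c). pmf (K c) x) = 1" using sum_pmf_eq_1[OF finK[OF c]] by simp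
    have "(\<Sum>x\<in>set_pmf (K c). - (pmf M c * pmf (K c) x * ln (pmf M c * pmf (K c) x)))
        = (\<Sum>x\<in>set_pmf (K c). pmf (K c) x * (- (pmf M c * ln (pmf M c))) + pmf M c * (- (pmf (K c) x * ln (pmf (K c) x))))"
      using c by (intro sum.cong refl) (simp add: ln_mult pmf_positive algebra_simps)
    also have "\<dots> = (\<Sum>x\<in>set_pmf (K c). pmf (K c) x) * (- (pmf M c * ln (pmf M c))) + pmf M c * ent (K c)"
      unfolding sum.distrib ent_def sum_distrib_left[symmetric] sum_distrib_right[symmetric] ..
    finally show "(\<Sum>x\<in>set_pmf (K c). - (pmf M c * pmf (K c) x * ln (pmf M c * pmf (K c) x)))
        = - (pmf M c * ln (pmf M c)) + pmf M c * ent (K c)" using s1 by simp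
  qed
  also have "\<dots> = ent M + (\<Sum>c\<in>set_pmf M. pmf M c * ent (K c))"
    unfolding sum.distrib ent_def ..
  finally show ?thesis .
qed

definition cnd :: "'w pmf \<Rightarrow> ('w \<Rightarrow> 'g) \<Rightarrow> 'g \<Rightarrow> 'w pmf" where
  "cnd \<mu> W \<gamma> = cond_pmf \<mu> {\<omega>. W \<omega> = \<gamma>}"

lemma cnd_ne: "\<gamma> \<in> set_pmf (map_pmf W \<mu>) \<Longrightarrow> set_pmf \<mu> \<inter> {\<omega>. W \<omega> = \<gamma>} \<noteq> {}"
  by auto

lemma set_cnd: "\<gamma> \<in> set_pmf (map_pmf W \<mu>) \<Longrightarrow> set_pmf (cnd \<mu> W \<gamma>) = set_pmf \<mu> \<inter> {\<omega>. W \<omega> = \<gamma>}"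
  unfolding cnd_def by (rule set_cond_pmf[OF cnd_ne])

lemma pmf_cnd: "\<gamma> \<in> set_pmf (map_pmf W \<mu>) \<Longrightarrow>
   pmf (cnd \<mu> W \<gamma>) \<omega> = (if W \<omega> = \<gamma> then pmf \<mu> \<omega> / pmf (map_pmf W \<mu>) \<gamma> else 0)"
  unfolding cnd_def by (subst pmf_cond[OF cnd_ne]) (auto simp: pmf_map vimage_def)

lemma bind_cnd: "bind_pmf (map_pmf W \<mu>) (cnd \<mu> W) = \<mu>"
  unfolding cnd_def
proof (rule bind_cond_pmf_cancel)
  fix x y assume "x \<in> set_pmf (map_pmf W \<mu>)" "y \<in> set_pmf \<mu>" "W y = x"
  then show "measure_pmf.prob \<mu> {y. W y = x} = measure_pmf.prob (map_pmf W \<mu>) {x. W y = x}"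
    by (simp add: vimage_def)
qed auto

lemma disint:
  "map_pmf (\<lambda>\<omega>. (W \<omega>, F \<omega>)) \<mu> = bind_pmf (map_pmf W \<mu>) (\<lambda>\<gamma>. map_pmf (Pair \<gamma>) (map_pmf F (cnd \<mu> W \<gamma>)))"
proof -
  have "map_pmf (\<lambda>\<omega>. (W \<omega>, F \<omega>)) \<mu> = map_pmf (\<lambda>\<omega>. (W \<omega>, F \<omega>)) (bind_pmf (map_pmf W \<mu>) (cnd \<mu> W))"
    by (simp add: bind_cnd)
  also have "\<dots> = bind_pmf (map_pmf W \<mu>) (\<lambda>\<gamma>. map_pmf (\<lambda>\<omega>. (W \<omega>, F \<omega>)) (cnd \<mu> W \<gamma>))"
    by (simp add: map_bind_pmf)
  also have "\<dots> = bind_pmf (map_pmf W \<mu>) (\<lambda>\<gamma>. map_pmf (Pair \<gamma>) (map_pmf F (cnd \<mu> W \<gamma>)))"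
  proof (rule bind_pmf_cong[OF refl])
    fix \<gamma> assume g: "\<gamma> \<in> set_pmf (map_pmf W \<mu>)"
    show "map_pmf (\<lambda>\<omega>. (W \<omega>, F \<omega>)) (cnd \<mu> W \<gamma>) = map_pmf (Pair \<gamma>) (map_pmf F (cnd \<mu> W \<gamma>))"
      unfolding map_pmf_comp by (rule map_pmf_cong[OF refl]) (use set_cnd[OF g] in auto)
  qed
  finally show ?thesis .
qed

lemma H_chain:
  assumes fin: "finite (set_pmf \<mu>)"
  shows "ent (map_pmf (\<lambda>\<omega>. (W \<omega>, F \<omega>)) \<mu>) = ent (map_pmf W \<mu>) +
     (\<Sum>\<gamma>\<in>set_pmf (map_pmf W \<mu>). pmf (map_pmf W \<mu>) \<gamma> * ent (map_pmf F (cnd \<mu> W \<gamma>)))"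
  unfolding disint[of W F \<mu>]
proof (rule ent_bind_Pair)
  show "finite (set_pmf (map_pmf W \<mu>))" using fin by simp
  fix c assume "c \<in> set_pmf (map_pmf W \<mu>)"
  then show "finite (set_pmf (map_pmf F (cnd \<mu> W c)))"
    using fin by (simp add: set_cnd)
qed

lemma H_mono:
  assumes fin: "finite (set_pmf \<mu>)"
  shows "ent (map_pmf W \<mu>) \<le> ent (map_pmf (\<lambda>\<omega>. (W \<omega>, F \<omega>)) \<mu>)"
  unfolding H_chain[OF fin]
  by (simp add: sum_nonneg ent_nonneg)

lemma ent_map_le:
  assumes fin: "finite (set_pmf \<mu>)"
  shows "ent (map_pmf f \<mu>) \<le> ent \<mu>"
proof -
  have "ent \<mu> = ent (map_pmf (\<lambda>x. (f x, x)) \<mu>)"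
    by (rule ent_map_inj[symmetric]) (auto simp: inj_on_def)
  then show ?thesis using H_mono[OF fin, of f "\<lambda>x. x"] by simp
qed

lemma KL_pair:
  assumes fin: "finite (set_pmf \<nu>)"
  shows "KL \<nu> (pair_pmf (map_pmf fst \<nu>) (map_pmf snd \<nu>)) = ent (map_pmf fst \<nu>) + ent (map_pmf snd \<nu>) - ent \<nu>"
proof -
  let ?A = "map_pmf fst \<nu>" and ?B = "map_pmf snd \<nu>"
  have posA: "\<And>z. z \<in> set_pmf \<nu> \<Longrightarrow> 0 < pmf ?A (fst z)" by (simp add: pmf_positive)
  have posB: "\<And>z. z \<in> set_pmf \<nu> \<Longrightarrow> 0 < pmf ?B (snd z)" by (simp add: pmf_positive)
  have "KL \<nu> (pair_pmf ?A ?B) = (\<Sum>z\<in>set_pmf \<nu>. pmf \<nu> z * ln (pmf \<nu> z) - pmf \<nu> z * ln (pmf ?A (fst z)) - pmf \<nu> z * ln (pmf ?B (snd z)))"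
    unfolding KL_def
  proof (rule sum.cong[OF refl])
    fix z assume z: "z \<in> set_pmf \<nu>"
    obtain a b where zab: "z = (a, b)" by (cases z)
    have "0 < pmf \<nu> z" using z by (simp add: pmf_positive)
    then show "pmf \<nu> z * ln (pmf \<nu> z / pmf (pair_pmf ?A ?B) z) = pmf \<nu> z * ln (pmf \<nu> z) - pmf \<nu> z * ln (pmf ?A (fst z)) - pmf \<nu> z * ln (pmf ?B (snd z))"
      using posA[OF z] posB[OF z] zab by (simp add: pmf_pair ln_div ln_mult algebra_simps)
  qed
  also have "\<dots> = (\<Sum>z\<in>set_pmf \<nu>. pmf \<nu> z * ln (pmf \<nu> z)) - (\<Sum>z\<in>set_pmf \<nu>. pmf \<nu> z * ln (pmf ?A (fst z))) - (\<Sum>z\<in>set_pmf \<nu>. pmf \<nu> z * ln (pmf ?B (snd z)))"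
    by (simp add: sum_subtractf)
  also have "(\<Sum>z\<in>set_pmf \<nu>. pmf \<nu> z * ln (pmf ?A (fst z))) = - ent ?A"
    unfolding sum_marg[OF fin, of "\<lambda>a. ln (pmf ?A a)" fst] by (simp add: ent_def sum_negf)
  also have "(\<Sum>z\<in>set_pmf \<nu>. pmf \<nu> z * ln (pmf ?B (snd z))) = - ent ?B"
    unfolding sum_marg[OF fin, of "\<lambda>a. ln (pmf ?B a)" snd] by (simp add: ent_def sum_negf)
  also have "(\<Sum>z\<in>set_pmf \<nu>. pmf \<nu> z * ln (pmf \<nu> z)) = - ent \<nu>"
    by (simp add: ent_def sum_negf)
  finally show ?thesis by simp
qed

lemma ent_pair_le:
  assumes fin: "finite (set_pmf \<nu>)"
  shows "ent \<nu> \<le> ent (map_pmf fst \<nu>) + ent (map_pmf snd \<nu>)"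
proof -
  have "0 \<le> KL \<nu> (pair_pmf (map_pmf fst \<nu>) (map_pmf snd \<nu>))"
    by (rule KL_nonneg) (use fin in \<open>force simp: set_pair_pmf\<close>)+
  then show ?thesis unfolding KL_pair[OF fin] by simp
qed

lemma H_subadd:
  assumes fin: "finite (set_pmf \<mu>)"
  shows "ent (map_pmf (\<lambda>\<omega>. (X \<omega>, Y \<omega>)) \<mu>) \<le> ent (map_pmf X \<mu>) + ent (map_pmf Y \<mu>)"
  using ent_pair_le[of "map_pmf (\<lambda>\<omega>. (X \<omega>, Y \<omega>)) \<mu>"] fin by (simp add: map_pmf_comp)

lemma H_submod:
  assumes fin: "finite (set_pmf \<mu>)"
  shows "ent (map_pmf (\<lambda>\<omega>. (W \<omega>, X \<omega>, Y \<omega>)) \<mu>) + ent (map_pmf W \<mu>)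
     \<le> ent (map_pmf (\<lambda>\<omega>. (W \<omega>, X \<omega>)) \<mu>) + ent (map_pmf (\<lambda>\<omega>. (W \<omega>, Y \<omega>)) \<mu>)"
proof -
  let ?P = "map_pmf W \<mu>"
  have "(\<Sum>\<gamma>\<in>set_pmf ?P. pmf ?P \<gamma> * ent (map_pmf (\<lambda>\<omega>. (X \<omega>, Y \<omega>)) (cnd \<mu> W \<gamma>)))
     \<le> (\<Sum>\<gamma>\<in>set_pmf ?P. pmf ?P \<gamma> * ent (map_pmf X (cnd \<mu> W \<gamma>)) + pmf ?P \<gamma> * ent (map_pmf Y (cnd \<mu> W \<gamma>)))"
  proof (rule sum_mono)
    fix \<gamma> assume g: "\<gamma> \<in> set_pmf ?P"
    have "finite (set_pmf (cnd \<mu> W \<gamma>))" using fin by (simp add: set_cnd[OF g])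
    from H_subadd[OF this, of X Y]
    show "pmf ?P \<gamma> * ent (map_pmf (\<lambda>\<omega>. (X \<omega>, Y \<omega>)) (cnd \<mu> W \<gamma>)) \<le> pmf ?P \<gamma> * ent (map_pmf X (cnd \<mu> W \<gamma>)) + pmf ?P \<gamma> * ent (map_pmf Y (cnd \<mu> W \<gamma>))"
      by (simp add: mult_left_mono flip: distrib_left)
  qed
  then show ?thesis
    unfolding H_chain[OF fin, of W "\<lambda>\<omega>. (X \<omega>, Y \<omega>)"] H_chain[OF fin, of W X] H_chain[OF fin, of W Y]
    by (simp add: sum.distrib)
qed

lemma expect_bind:
  fixes h :: "'b \<Rightarrow> real"
  assumes "finite (set_pmf p)" "\<And>x. x \<in> set_pmf p \<Longrightarrow> finite (set_pmf (f x))"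
  shows "measure_pmf.expectation (bind_pmf p f) h = measure_pmf.expectation p (\<lambda>a. measure_pmf.expectation (f a) h)"
  using pmf_expectation_bind[OF assms(1) assms(2) subset_refl, where h=h] expect_sum[OF assms(1)] by simp

lemma expect_bounds:
  fixes g :: "'a \<Rightarrow> real"
  assumes "finite (set_pmf M)" "\<And>x. 0 \<le> g x" "\<And>x. g x \<le> 1"
  shows "0 \<le> measure_pmf.expectation M g" "measure_pmf.expectation M g \<le> 1"
proof -
  have s1: "(\<Sum>x\<in>set_pmf M. pmf M x) = 1" using sum_pmf_eq_1[OF assms(1)] by simp
  show "0 \<le> measure_pmf.expectation M g" unfolding expect_sum[OF assms(1)]
    using assms(2) by (intro sum_nonneg) auto
  have "(\<Sum>x\<in>set_pmf M. pmf M x * g x) \<le> (\<Sum>x\<in>set_pmf M. pmf M x)"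
    using assms(3) by (intro sum_mono) (simp add: mult_left_le)
  then show "measure_pmf.expectation M g \<le> 1" unfolding expect_sum[OF assms(1)] using s1 by simp
qed

lemma prob_sumF:
  assumes "finite F" "set_pmf u \<subseteq> F"
  shows "measure_pmf.prob u B = (\<Sum>x\<in>B \<inter> F. pmf u x)"
proof -
  have fu: "finite (set_pmf u)" using assms finite_subset by blast
  have "measure_pmf.prob u B = measure_pmf.prob u (B \<inter> set_pmf u)" by (simp add: measure_Int_set_pmf)
  also have "\<dots> = (\<Sum>x\<in>B \<inter> set_pmf u. pmf u x)" using fu by (simp add: measure_measure_pmf_finite)
  also have "\<dots> = (\<Sum>x\<in>B \<inter> F. pmf u x)"
    using assms by (intro sum.mono_neutral_left) (auto simp: set_pmf_eq)
  finally show ?thesis .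
qed

lemma tvd_bdd: "bdd_above (range (\<lambda>A. \<bar>measure_pmf.prob p A - measure_pmf.prob q A\<bar>))"
proof (rule bdd_aboveI2)
  fix A
  have "measure_pmf.prob p A \<le> 1" "measure_pmf.prob q A \<le> 1" "0 \<le> measure_pmf.prob p A" "0 \<le> measure_pmf.prob q A"
    by auto
  then show "\<bar>measure_pmf.prob p A - measure_pmf.prob q A\<bar> \<le> 1" by linarith
qed

lemma tvd_ge: "\<bar>measure_pmf.prob p A - measure_pmf.prob q A\<bar> \<le> tv_dist p q"
  unfolding tv_dist_def by (rule cSUP_upper[OF _ tvd_bdd]) simp

lemma tvd_le: "(\<And>A. \<bar>measure_pmf.prob p A - measure_pmf.prob q A\<bar> \<le> c) \<Longrightarrow> tv_dist p q \<le> c"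
  unfolding tv_dist_def by (rule cSUP_least) auto

lemma tvd_nonneg: "0 \<le> tv_dist p q"
  using tvd_ge[of p "{}" q] by simp

lemma tvd_sym: "tv_dist p q = tv_dist q p"
  unfolding tv_dist_def by (simp add: abs_minus_commute)

lemma tvd_tri: "tv_dist p r \<le> tv_dist p q + tv_dist q r"
proof (rule tvd_le)
  fix A
  have "\<bar>measure_pmf.prob p A - measure_pmf.prob r A\<bar> \<le> \<bar>measure_pmf.prob p A - measure_pmf.prob q A\<bar> + \<bar>measure_pmf.prob q A - measure_pmf.prob r A\<bar>"
    by linarith
  then show "\<bar>measure_pmf.prob p A - measure_pmf.prob r A\<bar> \<le> tv_dist p q + tv_dist q r"
    using tvd_ge[of p A q] tvd_ge[of q A r] by linarith
qed

lemma tvd_test: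
  fixes g :: "'a \<Rightarrow> real"
  assumes fq: "finite (set_pmf q)" and fr: "finite (set_pmf r)" and g0: "\<And>x. 0 \<le> g x" and g1: "\<And>x. g x \<le> 1"
  shows "measure_pmf.expectation q g - measure_pmf.expectation r g \<le> tv_dist q r"
proof -
  let ?F = "set_pmf q \<union> set_pmf r"
  let ?A = "{x\<in>?F. pmf r x < pmf q x}"
  have fF: "finite ?F" using fq fr by simp
  have Eq: "measure_pmf.expectation q g = (\<Sum>x\<in>?F. g x * pmf q x)"
    by (rule integral_measure_pmf_real[OF fF]) auto
  have Er: "measure_pmf.expectation r g = (\<Sum>x\<in>?F. g x * pmf r x)"
    by (rule integral_measure_pmf_real[OF fF]) auto
  have "(\<Sum>x\<in>?F. g x * pmf q x) - (\<Sum>x\<in>?F. g x * pmf r x) = (\<Sum>x\<in>?F. (pmf q x - pmf r x) * g x)"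
    by (simp add: sum_subtractf algebra_simps)
  also have "\<dots> \<le> (\<Sum>x\<in>?F. if pmf r x < pmf q x then pmf q x - pmf r x else 0)"
  proof (rule sum_mono)
    fix x
    show "(pmf q x - pmf r x) * g x \<le> (if pmf r x < pmf q x then pmf q x - pmf r x else 0)"
      using g0[of x] g1[of x]
      by (auto simp: mult_left_le mult_nonpos_nonneg)
  qed
  also have "\<dots> = (\<Sum>x\<in>?A. pmf q x - pmf r x)"
    by (rule sum.inter_filter[OF fF, symmetric])
  also have "\<dots> = measure_pmf.prob q ?A - measure_pmf.prob r ?A"
    using fF by (simp add: sum_subtractf measure_measure_pmf_finite)
  also have "\<dots> \<le> tv_dist q r" using tvd_ge[of q ?A r] by linarith
  finally show ?thesis using Eq Er by simp
qed

lemma rep_Suc: "replicate_pmf (Suc n) q = bind_pmf q (\<lambda>x. map_pmf (Cons x) (replicate_pmf n q))"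
  by (simp add: map_pmf_def)

lemma finite_rep: "finite (set_pmf q) \<Longrightarrow> finite (set_pmf (replicate_pmf n q))"
  unfolding set_replicate_pmf
  by (rule finite_subset[OF _ finite_lists_length_eq[of "set_pmf q" n]]) auto

lemma rep_expect_diff:
  fixes g :: "'a list \<Rightarrow> real"
  assumes fq: "finite (set_pmf q)" and fr: "finite (set_pmf r)" and g0: "\<And>x. 0 \<le> g x" and g1: "\<And>x. g x \<le> 1"
  shows "measure_pmf.expectation (replicate_pmf n q) g - measure_pmf.expectation (replicate_pmf n r) g \<le> n * tv_dist q r"
  using g0 g1
proof (induction n arbitrary: g)
  case 0
  then show ?case by simp
next
  case (Suc n)
  define \<phi> where "\<phi> s x = measure_pmf.expectation (replicate_pmf n s) (\<lambda>xs. g (x # xs))" for s x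
  have E: "measure_pmf.expectation (replicate_pmf (Suc n) s) g = measure_pmf.expectation s (\<phi> s)"
    if "finite (set_pmf s)" for s
    unfolding rep_Suc \<phi>_def
    by (subst expect_bind) (use that finite_rep in auto)
  have b0: "0 \<le> \<phi> s x" "\<phi> s x \<le> 1" if "finite (set_pmf s)" for s x
    unfolding \<phi>_def using expect_bounds[OF finite_rep[OF that], of "\<lambda>xs. g (x # xs)" n] Suc.prems by auto
  have d1: "measure_pmf.expectation q (\<phi> q) - measure_pmf.expectation r (\<phi> q) \<le> tv_dist q r"
    by (rule tvd_test[OF fq fr]) (use b0[OF fq] in auto)
  have d2: "measure_pmf.expectation r (\<phi> q) - measure_pmf.expectation r (\<phi> r) \<le> n * tv_dist q r"
  proof -
    have pw: "\<phi> q x - \<phi> r x \<le> n * tv_dist q r" for x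
      unfolding \<phi>_def by (rule Suc.IH) (use Suc.prems in auto)
    have "measure_pmf.expectation r (\<phi> q) - measure_pmf.expectation r (\<phi> r) = (\<Sum>x\<in>set_pmf r. pmf r x * (\<phi> q x - \<phi> r x))"
      unfolding expect_sum[OF fr] by (simp add: sum_subtractf algebra_simps)
    also have "\<dots> \<le> (\<Sum>x\<in>set_pmf r. pmf r x * (n * tv_dist q r))"
      by (intro sum_mono mult_left_mono pw) auto
    also have "\<dots> = n * tv_dist q r" using sum_pmf_eq_1[OF fr] by (simp add: sum_distrib_right[symmetric])
    finally show ?thesis .
  qed
  show ?case using E[OF fq] E[OF fr] d1 d2 by (simp add: algebra_simps)
qed

definition mixp :: "real \<Rightarrow> 'a pmf \<Rightarrow> 'a pmf \<Rightarrow> 'a pmf" where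
  "mixp \<theta> q p = bind_pmf (bernoulli_pmf \<theta>) (\<lambda>b. if b then q else p)"

lemma set_mixp: "set_pmf (mixp \<theta> q p) \<subseteq> set_pmf q \<union> set_pmf p"
  unfolding mixp_def by (auto simp: set_bind_pmf split: if_splits)

lemma prob_mixp:
  assumes "0 \<le> \<theta>" "\<theta> \<le> 1" "finite (set_pmf q)" "finite (set_pmf p)"
  shows "measure_pmf.prob (mixp \<theta> q p) A = \<theta> * measure_pmf.prob q A + (1 - \<theta>) * measure_pmf.prob p A"
proof -
  have "measure_pmf.prob (mixp \<theta> q p) A = measure_pmf.expectation (mixp \<theta> q p) (indicator A)" by simp
  also have "\<dots> = (\<Sum>b\<in>UNIV. pmf (bernoulli_pmf \<theta>) b *\<^sub>R measure_pmf.expectation (if b then q else p) (indicator A))"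
    unfolding mixp_def by (rule pmf_expectation_bind) (use assms in auto)
  also have "\<dots> = \<theta> * measure_pmf.prob q A + (1 - \<theta>) * measure_pmf.prob p A"
    using assms by (simp add: UNIV_bool pmf_bernoulli_True pmf_bernoulli_False)
  finally show ?thesis .
qed

lemma tvd_mixp1:
  assumes "0 \<le> \<theta>" "\<theta> \<le> 1" "finite (set_pmf q)" "finite (set_pmf p)"
  shows "tv_dist p (mixp \<theta> q p) \<le> \<theta> * tv_dist p q"
proof (rule tvd_le)
  fix A
  have "\<bar>measure_pmf.prob p A - measure_pmf.prob (mixp \<theta> q p) A\<bar> = \<theta> * \<bar>measure_pmf.prob p A - measure_pmf.prob q A\<bar>"
  proof -
    have "measure_pmf.prob p A - measure_pmf.prob (mixp \<theta> q p) A = \<theta> * (measure_pmf.prob p A - measure_pmf.prob q A)"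
      using assms by (simp add: prob_mixp algebra_simps)
    then show ?thesis using assms by (simp add: abs_mult)
  qed
  also have "\<dots> \<le> \<theta> * tv_dist p q" using assms tvd_ge by (intro mult_left_mono) auto
  finally show "\<bar>measure_pmf.prob p A - measure_pmf.prob (mixp \<theta> q p) A\<bar> \<le> \<theta> * tv_dist p q" .
qed

lemma tvd_mixp2:
  assumes "0 \<le> \<theta>" "\<theta> \<le> 1" "finite (set_pmf q)" "finite (set_pmf p)"
  shows "tv_dist (mixp \<theta> q p) q \<le> (1 - \<theta>) * tv_dist p q"
proof (rule tvd_le)
  fix A
  have "\<bar>measure_pmf.prob (mixp \<theta> q p) A - measure_pmf.prob q A\<bar> = (1 - \<theta>) * \<bar>measure_pmf.prob p A - measure_pmf.prob q A\<bar>"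
  proof -
    have "measure_pmf.prob (mixp \<theta> q p) A - measure_pmf.prob q A = (1 - \<theta>) * (measure_pmf.prob p A - measure_pmf.prob q A)"
      using assms by (simp add: prob_mixp algebra_simps)
    then show ?thesis using assms by (simp add: abs_mult)
  qed
  also have "\<dots> \<le> (1 - \<theta>) * tv_dist p q" using assms tvd_ge by (intro mult_left_mono) auto
  finally show "\<bar>measure_pmf.prob (mixp \<theta> q p) A - measure_pmf.prob q A\<bar> \<le> (1 - \<theta>) * tv_dist p q" .
qed

lemma prob_le_union: "measure_pmf.prob c X \<le> measure_pmf.prob c Y + measure_pmf.prob c (X - Y)"
proof -
  have "measure_pmf.prob c X \<le> measure_pmf.prob c (Y \<union> (X - Y))"
    by (rule measure_pmf.finite_measure_mono) auto
  also have "\<dots> = measure_pmf.prob c Y + measure_pmf.prob c (X - Y)"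
    by (rule measure_pmf.finite_measure_Union) auto
  finally show ?thesis .
qed

lemma tvd_coupling:
  "tv_dist (map_pmf f c) (map_pmf g c) \<le> measure_pmf.prob c {\<omega>. f \<omega> \<noteq> g \<omega>}"
proof (rule tvd_le)
  fix A
  have 1: "measure_pmf.prob c (f -` A) \<le> measure_pmf.prob c (g -` A) + measure_pmf.prob c {\<omega>. f \<omega> \<noteq> g \<omega>}"
    using prob_le_union[of c "f -` A" "g -` A"] measure_pmf.finite_measure_mono[of "f -` A - g -` A" "{\<omega>. f \<omega> \<noteq> g \<omega>}" c]
    by fastforce
  have 2: "measure_pmf.prob c (g -` A) \<le> measure_pmf.prob c (f -` A) + measure_pmf.prob c {\<omega>. f \<omega> \<noteq> g \<omega>}"
    using prob_le_union[of c "g -` A" "f -` A"] measure_pmf.finite_measure_mono[of "g -` A - f -` A" "{\<omega>. f \<omega> \<noteq> g \<omega>}" c]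
    by fastforce
  show "\<bar>measure_pmf.prob (map_pmf f c) A - measure_pmf.prob (map_pmf g c) A\<bar> \<le> measure_pmf.prob c {\<omega>. f \<omega> \<noteq> g \<omega>}"
    using 1 2 by simp
qed

lemma tvd_le_A:
  assumes fp: "finite (set_pmf p)" and fu: "finite (set_pmf u)"
  shows "tv_dist p u \<le> measure_pmf.prob u {x. pmf p x < pmf u x} - measure_pmf.prob p {x. pmf p x < pmf u x}"
proof -
  let ?F = "set_pmf p \<union> set_pmf u"
  let ?A = "{x. pmf p x < pmf u x}"
  let ?\<psi> = "\<lambda>x. if pmf p x < pmf u x then pmf u x - pmf p x else 0"
  have fF: "finite ?F" using fp fu by simp
  have key: "measure_pmf.prob u B - measure_pmf.prob p B \<le> measure_pmf.prob u ?A - measure_pmf.prob p ?A" for B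
  proof -
    have "measure_pmf.prob u B - measure_pmf.prob p B = (\<Sum>x\<in>B \<inter> ?F. pmf u x - pmf p x)"
      using prob_sumF[OF fF, of u B] prob_sumF[OF fF, of p B] by (simp add: sum_subtractf)
    also have "\<dots> \<le> (\<Sum>x\<in>B \<inter> ?F. ?\<psi> x)" by (intro sum_mono) auto
    also have "\<dots> \<le> (\<Sum>x\<in>?F. ?\<psi> x)" using fF by (intro sum_mono2) auto
    also have "\<dots> = (\<Sum>x\<in>{x\<in>?F. pmf p x < pmf u x}. pmf u x - pmf p x)"
      by (rule sum.inter_filter[OF fF, symmetric])
    also have "{x\<in>?F. pmf p x < pmf u x} = ?A \<inter> ?F" by auto
    also have "(\<Sum>x\<in>?A \<inter> ?F. pmf u x - pmf p x) = measure_pmf.prob u ?A - measure_pmf.prob p ?A"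
      using prob_sumF[OF fF, of u ?A] prob_sumF[OF fF, of p ?A] by (simp add: sum_subtractf)
    finally show ?thesis .
  qed
  show ?thesis
  proof (rule tvd_le)
    fix B
    have "measure_pmf.prob p B - measure_pmf.prob u B = measure_pmf.prob u (- B) - measure_pmf.prob p (- B)"
      using measure_pmf.prob_compl[of "B" p] measure_pmf.prob_compl[of B u] by (simp add: Compl_eq_Diff_UNIV)
    then show "\<bar>measure_pmf.prob p B - measure_pmf.prob u B\<bar> \<le> measure_pmf.prob u ?A - measure_pmf.prob p ?A"
      using key[of B] key[of "- B"] by linarith
  qed
qed

definition dl :: "nat \<Rightarrow> nat \<Rightarrow> nat list set" where
  "dl m N = {is. distinct is \<and> length is = N \<and> set is \<subseteq> {..<m}}"

lemma finite_dl: "finite (dl m N)"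
  unfolding dl_def
  by (rule finite_subset[OF _ finite_lists_length_eq[of "{..<m}" N]]) auto

lemma dl_ne: "N \<le> m \<Longrightarrow> dl m N \<noteq> {}"
  unfolding dl_def by (rule ex_in_conv[THEN iffD1], rule exI[of _ "[0..<N]"]) auto

lemma card_dl: "N \<le> m \<Longrightarrow> card (dl m N) = \<Prod>{m - N + 1..m}"
proof -
  assume "N \<le> m"
  have "dl m N = {xs. length xs = N \<and> distinct xs \<and> set xs \<subseteq> {..<m}}" unfolding dl_def by auto
  then show ?thesis using card_lists_distinct_length_eq[of "{..<m}" N] \<open>N \<le> m\<close> by simp
qed

lemma card_dl_Suc: "a < m \<Longrightarrow> card (dl m (Suc a)) = (m - a) * card (dl m a)"
proof -
  assume a: "a < m"
  have "{m - Suc a + 1..m} = insert (m - a) {m - a + 1..m}" using a by auto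
  then show ?thesis using a by (simp add: card_dl)
qed

lemma card_dl_pos: "N \<le> m \<Longrightarrow> 0 < card (dl m N)"
  using dl_ne finite_dl by (simp add: card_gt_0_iff)

lemma set_U: "N \<le> m \<Longrightarrow> set_pmf (pmf_of_set (dl m N)) = dl m N"
  by (rule set_pmf_of_set[OF dl_ne finite_dl])

lemma pmf_U: "N \<le> m \<Longrightarrow> pmf (pmf_of_set (dl m N)) r = (if r \<in> dl m N then 1 / card (dl m N) else 0)"
  by (subst pmf_of_set[OF dl_ne finite_dl]) auto

lemma len_U: "N \<le> m \<Longrightarrow> \<pi> \<in> set_pmf (pmf_of_set (dl m N)) \<Longrightarrow> length \<pi> = N"
  by (simp add: set_U) (simp add: dl_def)

lemma dl_take: "\<pi> \<in> dl m N \<Longrightarrow> a \<le> N \<Longrightarrow> take a \<pi> \<in> dl m a"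
  unfolding dl_def by (auto dest: in_set_takeD)

lemma dl_Suc_decomp: "\<pi> \<in> dl m (Suc a) \<Longrightarrow> \<pi> = take a \<pi> @ [\<pi> ! a]"
  unfolding dl_def by (auto simp: take_Suc_conv_app_nth[symmetric])

lemma map_take_U1:
  assumes a: "a < m"
  shows "map_pmf (take a) (pmf_of_set (dl m (Suc a))) = pmf_of_set (dl m a)"
proof (rule pmf_eqI)
  fix r
  have ne1: "dl m (Suc a) \<noteq> {}" using a dl_ne by simp
  have ne0: "dl m a \<noteq> {}" using a dl_ne by simp
  have "pmf (map_pmf (take a) (pmf_of_set (dl m (Suc a)))) r = card (dl m (Suc a) \<inter> {\<pi>. take a \<pi> = r}) / card (dl m (Suc a))"
    by (simp add: pmf_map measure_pmf_of_set[OF ne1 finite_dl] vimage_def)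
  also have "\<dots> = pmf (pmf_of_set (dl m a)) r"
  proof (cases "r \<in> dl m a")
    case True
    have eq: "dl m (Suc a) \<inter> {\<pi>. take a \<pi> = r} = (\<lambda>i. r @ [i]) ` ({..<m} - set r)"
    proof (intro equalityI subsetI)
      fix \<pi> assume "\<pi> \<in> dl m (Suc a) \<inter> {\<pi>. take a \<pi> = r}"
      then have p: "\<pi> \<in> dl m (Suc a)" "take a \<pi> = r" by auto
      have d: "\<pi> = r @ [\<pi> ! a]" using dl_Suc_decomp[OF p(1)] p(2) by simp
      have dd: "distinct (r @ [\<pi> ! a])" "set (r @ [\<pi> ! a]) \<subseteq> {..<m}"
        using p(1) d unfolding dl_def by (metis mem_Collect_eq)+
      have "\<pi> ! a \<in> {..<m} - set r" using dd by simp
      then show "\<pi> \<in> (\<lambda>i. r @ [i]) ` ({..<m} - set r)" using d by blast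
    next
      fix \<pi> assume "\<pi> \<in> (\<lambda>i. r @ [i]) ` ({..<m} - set r)"
      then obtain i where "i \<in> {..<m} - set r" "\<pi> = r @ [i]" by auto
      then show "\<pi> \<in> dl m (Suc a) \<inter> {\<pi>. take a \<pi> = r}" using True unfolding dl_def by auto
    qed
    have cr: "card ({..<m} - set r) = m - a"
      using True unfolding dl_def by (auto simp: card_Diff_subset distinct_card)
    have "card (dl m (Suc a) \<inter> {\<pi>. take a \<pi> = r}) = m - a"
      unfolding eq by (subst card_image) (auto simp: inj_on_def cr)
    then show ?thesis using True a card_dl_Suc[OF a] card_dl_pos[of a m]
      by (simp add: pmf_U)
  next
    case False
    have "dl m (Suc a) \<inter> {\<pi>. take a \<pi> = r} = {}" using False dl_take[of _ m "Suc a" a] by auto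
    then show ?thesis using False a by (simp add: pmf_U)
  qed
  finally show "pmf (map_pmf (take a) (pmf_of_set (dl m (Suc a)))) r = pmf (pmf_of_set (dl m a)) r" .
qed

lemma map_take_U:
  assumes "a \<le> N" "N \<le> m"
  shows "map_pmf (take a) (pmf_of_set (dl m N)) = pmf_of_set (dl m a)"
  using assms
proof (induction N rule: dec_induct)
  case base
  have "map_pmf (take a) (pmf_of_set (dl m a)) = map_pmf (\<lambda>x. x) (pmf_of_set (dl m a))"
    by (rule map_pmf_cong) (auto dest: len_U[OF base])
  then show ?case by simp
next
  case (step N)
  have "map_pmf (take a) (pmf_of_set (dl m (Suc N))) = map_pmf (take a) (map_pmf (take N) (pmf_of_set (dl m (Suc N))))"
    unfolding map_pmf_comp using step(1) by (simp add: min_def)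
  also have "\<dots> = map_pmf (take a) (pmf_of_set (dl m N))"
    using step by (simp add: map_take_U1)
  also have "\<dots> = pmf_of_set (dl m a)" using step by simp
  finally show ?case .
qed

lemma inj_rotate: "inj (rotate n)"
proof (induction n)
  case 0 then show ?case by simp
next
  case (Suc n)
  have "rotate (Suc n) = rotate1 \<circ> rotate n" by (rule ext) simp
  then show ?case using inj_compose[OF inj_rotate1 Suc.IH] by (simp add: comp_def)
qed

lemma map_rotate_U: "map_pmf (rotate t) (pmf_of_set (dl m N)) = pmf_of_set (dl m N)" if "N \<le> m"
proof -
  have inj: "inj_on (rotate t) (dl m N)" using inj_rotate by (rule inj_on_subset) simp
  have im: "rotate t ` dl m N = dl m N"
    by (rule endo_inj_surj[OF finite_dl _ inj]) (auto simp: dl_def)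
  show ?thesis using map_pmf_of_set_inj[OF inj dl_ne[OF that] finite_dl] im by simp
qed

lemma map_window_U:
  assumes "t + n \<le> N" "N \<le> m"
  shows "map_pmf (\<lambda>\<pi>. take n (drop t \<pi>)) (pmf_of_set (dl m N)) = pmf_of_set (dl m n)"
proof -
  have "map_pmf (\<lambda>\<pi>. take n (drop t \<pi>)) (pmf_of_set (dl m N)) = map_pmf (\<lambda>\<pi>. take n (rotate t \<pi>)) (pmf_of_set (dl m N))"
  proof (rule map_pmf_cong[OF refl])
    fix \<pi> assume "\<pi> \<in> set_pmf (pmf_of_set (dl m N))"
    then have len: "length \<pi> = N" using assms len_U by blast
    show "take n (drop t \<pi>) = take n (rotate t \<pi>)"
    proof (cases "t < N")
      case True
      then have "t mod length \<pi> = t" using len by simp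
      then have "rotate t \<pi> = drop t \<pi> @ take t \<pi>" by (simp add: rotate_drop_take)
      then show ?thesis using len assms by simp
    next
      case False
      then have "n = 0" using assms by simp
      then show ?thesis by simp
    qed
  qed
  also have "\<dots> = map_pmf (take n) (map_pmf (rotate t) (pmf_of_set (dl m N)))" by (simp add: map_pmf_comp)
  also have "\<dots> = pmf_of_set (dl m n)" using assms by (simp add: map_rotate_U map_take_U)
  finally show ?thesis .
qed

lemma map_swap_U:
  assumes "s \<le> s'" "s' < N" "N \<le> m"
  shows "map_pmf (\<lambda>\<pi>. (take s \<pi>, \<pi> ! s')) (pmf_of_set (dl m N)) = map_pmf (\<lambda>\<pi>. (take s \<pi>, \<pi> ! s)) (pmf_of_set (dl m N))"
proof -
  define \<sigma> where "\<sigma> \<pi> = \<pi>[s := \<pi> ! s', s' := \<pi> ! s]" for \<pi> :: "nat list"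
  have inv: "\<sigma> (\<sigma> \<pi>) = \<pi>" if "\<pi> \<in> dl m N" for \<pi>
  proof -
    have "length \<pi> = N" using that by (simp add: dl_def)
    then show ?thesis using assms unfolding \<sigma>_def
      by (intro nth_equalityI) (auto simp: nth_list_update)
  qed
  have inj: "inj_on \<sigma> (dl m N)" by (metis inj_onI inv)
  have sub: "\<sigma> ` dl m N \<subseteq> dl m N"
    using assms unfolding \<sigma>_def dl_def by auto
  have im: "\<sigma> ` dl m N = dl m N" by (rule endo_inj_surj[OF finite_dl sub inj])
  have U: "map_pmf \<sigma> (pmf_of_set (dl m N)) = pmf_of_set (dl m N)"
    using map_pmf_of_set_inj[OF inj dl_ne finite_dl] im assms by simp
  have "map_pmf (\<lambda>\<pi>. (take s \<pi>, \<pi> ! s')) (pmf_of_set (dl m N)) = map_pmf (\<lambda>\<pi>. (take s \<pi>, \<pi> ! s')) (map_pmf \<sigma> (pmf_of_set (dl m N)))"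
    using U by simp
  also have "\<dots> = map_pmf (\<lambda>\<pi>. (take s \<pi>, \<pi> ! s)) (pmf_of_set (dl m N))"
    unfolding map_pmf_comp
  proof (rule map_pmf_cong[OF refl])
    fix \<pi> assume "\<pi> \<in> set_pmf (pmf_of_set (dl m N))"
    then have len: "length \<pi> = N" using assms len_U by blast
    show "(take s (\<sigma> \<pi>), \<sigma> \<pi> ! s') = (take s \<pi>, \<pi> ! s)"
      using assms len unfolding \<sigma>_def by (auto simp: nth_list_update)
  qed
  finally show ?thesis .
qed

lemma map_head_U:
  assumes "t < N" "N \<le> m"
  shows "map_pmf (\<lambda>\<pi>. (take t \<pi>, \<pi> ! t)) (pmf_of_set (dl m N))
       = bind_pmf (pmf_of_set (dl m t)) (\<lambda>r. map_pmf (Pair r) (pmf_of_set ({..<m} - set r)))"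
proof -
  have "map_pmf (\<lambda>\<pi>. (take t \<pi>, \<pi> ! t)) (pmf_of_set (dl m N))
      = map_pmf (\<lambda>\<pi>. (take t \<pi>, \<pi> ! t)) (map_pmf (take (Suc t)) (pmf_of_set (dl m N)))"
    unfolding map_pmf_comp by (simp add: min_def)
  also have "\<dots> = map_pmf (\<lambda>\<pi>. (take t \<pi>, \<pi> ! t)) (pmf_of_set (dl m (Suc t)))"
    using assms by (simp add: map_take_U)
  also have "\<dots> = bind_pmf (pmf_of_set (dl m t)) (\<lambda>r. map_pmf (Pair r) (pmf_of_set ({..<m} - set r)))"
  proof (rule pmf_eqI)
    fix z :: "nat list \<times> nat"
    obtain r i where z: "z = (r, i)" by (cases z)
    let ?f = "\<lambda>\<pi>::nat list. (take t \<pi>, \<pi> ! t)"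
    have tm: "t < m" using assms by simp
    have inj: "inj_on ?f (dl m (Suc t))"
    proof (rule inj_onI)
      fix x y assume xy: "x \<in> dl m (Suc t)" "y \<in> dl m (Suc t)" "?f x = ?f y"
      have "x = take t x @ [x ! t]" by (rule dl_Suc_decomp[OF xy(1)])
      also have "\<dots> = take t y @ [y ! t]" using xy(3) by simp
      also have "\<dots> = y" by (rule dl_Suc_decomp[OF xy(2), symmetric])
      finally show "x = y" .
    qed
    have ne: "dl m (Suc t) \<noteq> {}" using tm dl_ne by simp
    have rhs: "pmf (bind_pmf (pmf_of_set (dl m t)) (\<lambda>r. map_pmf (Pair r) (pmf_of_set ({..<m} - set r)))) (r, i)
        = pmf (pmf_of_set (dl m t)) r * pmf (pmf_of_set ({..<m} - set r)) i"
      by (rule pmf_bind_Pair)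
    show "pmf (map_pmf ?f (pmf_of_set (dl m (Suc t)))) z = pmf (bind_pmf (pmf_of_set (dl m t)) (\<lambda>r. map_pmf (Pair r) (pmf_of_set ({..<m} - set r)))) z"
    proof (cases "r \<in> dl m t \<and> i \<in> {..<m} - set r")
      case True
      have rin: "r @ [i] \<in> dl m (Suc t)" using True unfolding dl_def by auto
      have fz: "?f (r @ [i]) = z" using True z unfolding dl_def by auto
      have cr: "card ({..<m} - set r) = m - t"
        using True unfolding dl_def by (auto simp: card_Diff_subset distinct_card)
      have "pmf (map_pmf ?f (pmf_of_set (dl m (Suc t)))) z = pmf (pmf_of_set (dl m (Suc t))) (r @ [i])"
        using pmf_map_inj[of ?f "pmf_of_set (dl m (Suc t))" "r @ [i]"] inj rin fz
        by (simp add: set_pmf_of_set[OF ne finite_dl])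
      also have "\<dots> = 1 / card (dl m (Suc t))" using rin tm by (simp add: pmf_U)
      also have "\<dots> = pmf (pmf_of_set (dl m t)) r * pmf (pmf_of_set ({..<m} - set r)) i"
      proof -
        have ne2: "{..<m} - set r \<noteq> {}" using cr tm by (metis card.empty zero_less_diff less_irrefl)
        have "pmf (pmf_of_set ({..<m} - set r)) i = 1 / (m - t)"
          using True cr tm by (subst pmf_of_set[OF ne2]) auto
        then show ?thesis
          using True card_dl_Suc[OF tm] cr card_dl_pos[of t m] tm by (simp add: pmf_U of_nat_diff)
      qed
      finally show ?thesis using rhs z by simp
    next
      case False
      have "z \<notin> ?f ` set_pmf (pmf_of_set (dl m (Suc t)))"
      proof
        assume "z \<in> ?f ` set_pmf (pmf_of_set (dl m (Suc t)))"
        then obtain \<pi> where p: "\<pi> \<in> dl m (Suc t)" "z = ?f \<pi>" by (auto simp: set_pmf_of_set[OF ne finite_dl])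
        have d: "\<pi> = take t \<pi> @ [\<pi> ! t]" by (rule dl_Suc_decomp[OF p(1)])
        have "take t \<pi> \<in> dl m t" using dl_take[OF p(1)] by simp
        moreover have "\<pi> ! t \<in> {..<m} - set (take t \<pi>)"
        proof -
          have dd: "distinct (take t \<pi> @ [\<pi> ! t])" "set (take t \<pi> @ [\<pi> ! t]) \<subseteq> {..<m}"
            using p(1) d unfolding dl_def by (metis mem_Collect_eq)+
          then show ?thesis by simp
        qed
        ultimately show False using False p(2) z by auto
      qed
      then have l0: "pmf (map_pmf ?f (pmf_of_set (dl m (Suc t)))) z = 0" by (rule pmf_map_outside)
      have "pmf (pmf_of_set (dl m t)) r * pmf (pmf_of_set ({..<m} - set r)) i = 0"
      proof (cases "r \<in> dl m t")
        case True
        then have "i \<notin> {..<m} - set r" using False by simp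
        moreover have "{..<m} - set r \<noteq> {}"
        proof -
          have "card ({..<m} - set r) = m - t"
            using True unfolding dl_def by (auto simp: card_Diff_subset distinct_card)
          then show ?thesis using tm by (metis card.empty zero_less_diff less_irrefl)
        qed
        ultimately show ?thesis by simp
      next
        case False
        then show ?thesis using tm by (simp add: pmf_U)
      qed
      then show ?thesis using l0 rhs z by simp
    qed
  qed
  finally show ?thesis .
qed

lemma map_nth_rep:
  assumes "i < m"
  shows "map_pmf (\<lambda>S. S ! i) (replicate_pmf m p) = p"
  using assms
proof (induction m arbitrary: i)
  case 0 then show ?case by simp
next
  case (Suc m)
  show ?case
  proof (cases i)
    case 0
    then show ?thesis unfolding rep_Suc map_bind_pmf map_pmf_comp by (simp add: bind_return_pmf')
  next
    case (Suc j)
    then have "j < m" using Suc.prems by simp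
    then show ?thesis unfolding rep_Suc map_bind_pmf map_pmf_comp using Suc.IH \<open>i = Suc j\<close> by simp
  qed
qed

lemma pair_as_bind: "pair_pmf A B = bind_pmf A (\<lambda>x. map_pmf (Pair x) B)"
  by (simp add: pair_pmf_def map_pmf_def)

lemma pair_as_bind2: "pair_pmf A B = map_pmf (\<lambda>(x, y). (y, x)) (bind_pmf B (\<lambda>y. map_pmf (Pair y) A))"
  by (subst pair_commute_pmf) (simp add: pair_as_bind)

lemma ent_cong_inj:
  assumes "inj_on h (f ` set_pmf \<mu>)" "\<And>\<omega>. \<omega> \<in> set_pmf \<mu> \<Longrightarrow> g \<omega> = h (f \<omega>)"
  shows "ent (map_pmf g \<mu>) = ent (map_pmf f \<mu>)"
proof -
  have "map_pmf g \<mu> = map_pmf h (map_pmf f \<mu>)"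
    unfolding map_pmf_comp using assms(2) by (intro map_pmf_cong) auto
  then show ?thesis using ent_map_inj[of h "map_pmf f \<mu>"] assms(1) by simp
qed

lemma ent_swap: "ent (map_pmf (\<lambda>\<omega>. (a \<omega>, b \<omega>)) \<mu>) = ent (map_pmf (\<lambda>\<omega>. (b \<omega>, a \<omega>)) \<mu>)"
  by (rule ent_cong_inj[where h = "\<lambda>(x, y). (y, x)"]) (auto simp: inj_on_def)

lemma H_cond_more:
  assumes fin: "finite (set_pmf \<mu>)"
  shows "ent (map_pmf (\<lambda>\<omega>. (G \<omega>, Y \<omega>)) \<mu>) - ent (map_pmf G \<mu>)
      \<le> ent (map_pmf (\<lambda>\<omega>. (\<phi> (G \<omega>), Y \<omega>)) \<mu>) - ent (map_pmf (\<lambda>\<omega>. \<phi> (G \<omega>)) \<mu>)"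
proof -
  have sm: "ent (map_pmf (\<lambda>\<omega>. (\<phi> (G \<omega>), Y \<omega>, G \<omega>)) \<mu>) + ent (map_pmf (\<lambda>\<omega>. \<phi> (G \<omega>)) \<mu>)
     \<le> ent (map_pmf (\<lambda>\<omega>. (\<phi> (G \<omega>), Y \<omega>)) \<mu>) + ent (map_pmf (\<lambda>\<omega>. (\<phi> (G \<omega>), G \<omega>)) \<mu>)"
    by (rule H_submod[OF fin])
  have e1: "ent (map_pmf (\<lambda>\<omega>. (\<phi> (G \<omega>), Y \<omega>, G \<omega>)) \<mu>) = ent (map_pmf (\<lambda>\<omega>. (G \<omega>, Y \<omega>)) \<mu>)"
    by (rule ent_cong_inj[where h = "\<lambda>(g, y). (\<phi> g, y, g)"]) (auto simp: inj_on_def)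
  have e2: "ent (map_pmf (\<lambda>\<omega>. (\<phi> (G \<omega>), G \<omega>)) \<mu>) = ent (map_pmf G \<mu>)"
    by (rule ent_cong_inj[where h = "\<lambda>g. (\<phi> g, g)"]) (auto simp: inj_on_def)
  show ?thesis using sm e1 e2 by simp
qed

lemma rep_Suc_map: "replicate_pmf (Suc n) q = map_pmf (\<lambda>(x, xs). x # xs) (bind_pmf q (\<lambda>x. map_pmf (Pair x) (replicate_pmf n q)))"
  unfolding rep_Suc map_bind_pmf map_pmf_comp by simp

lemma pmf_rep:
  "length ys = n \<Longrightarrow> pmf (replicate_pmf n q) ys = (\<Prod>l<n. pmf q (ys ! l))"
proof (induction n arbitrary: ys)
  case 0 then show ?case by simp
next
  case (Suc n)
  then obtain y ys' where ys: "ys = y # ys'" "length ys' = n" by (cases ys) auto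
  have inj: "inj (\<lambda>(x::'a, xs). x # xs)" by (auto simp: inj_on_def)
  have "pmf (replicate_pmf (Suc n) q) ys = pmf (bind_pmf q (\<lambda>x. map_pmf (Pair x) (replicate_pmf n q))) (y, ys')"
    unfolding rep_Suc_map ys(1) using pmf_map_inj'[OF inj, of _ "(y, ys')"] by simp
  also have "\<dots> = pmf q y * pmf (replicate_pmf n q) ys'" by (rule pmf_bind_Pair)
  also have "\<dots> = (\<Prod>l<Suc n. pmf q (ys ! l))"
    using Suc.IH[OF ys(2)] ys by (subst prod.lessThan_Suc_shift) simp
  finally show ?case .
qed

lemma finite_bind_Pair:
  assumes "finite (set_pmf M)" "\<And>c. c \<in> set_pmf M \<Longrightarrow> finite (set_pmf (K c))"
  shows "finite (set_pmf (bind_pmf M (\<lambda>c. map_pmf (Pair c) (K c))))"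
  unfolding set_bind_Pair using assms by auto

lemma KL_prod:
  fixes \<nu> :: "('g \<times> 'y list) pmf" and \<rho> :: "('g \<times> 'y) pmf"
  assumes fin: "finite (set_pmf \<nu>)"
    and len: "\<And>z. z \<in> set_pmf \<nu> \<Longrightarrow> length (snd z) = n"
    and marg: "\<And>l. l < n \<Longrightarrow> map_pmf (\<lambda>z. (fst z, snd z ! l)) \<nu> = \<rho>"
    and marg1: "map_pmf fst \<nu> = \<rho>1"
    and dis: "\<rho> = bind_pmf \<rho>1 (\<lambda>\<gamma>. map_pmf (Pair \<gamma>) (q \<gamma>))"
  defines "\<nu>' \<equiv> bind_pmf \<rho>1 (\<lambda>\<gamma>. map_pmf (Pair \<gamma>) (replicate_pmf n (q \<gamma>)))"
  shows "set_pmf \<nu> \<subseteq> set_pmf \<nu>'" "KL \<nu> \<nu>' = n * (ent \<rho> - ent \<rho>1) + ent \<rho>1 - ent \<nu>"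
proof -
  have pr: "pmf \<rho> (\<gamma>, y) = pmf \<rho>1 \<gamma> * pmf (q \<gamma>) y" for \<gamma> y
    unfolding dis by (rule pmf_bind_Pair)
  have pn': "pmf \<nu>' (\<gamma>, ys) = pmf \<rho>1 \<gamma> * pmf (replicate_pmf n (q \<gamma>)) ys" for \<gamma> ys
    unfolding \<nu>'_def by (rule pmf_bind_Pair)
  have pos1: "0 < pmf \<rho>1 (fst z)" if "z \<in> set_pmf \<nu>" for z
    using that marg1[symmetric] by (auto simp: pmf_positive)
  have posr: "0 < pmf \<rho> (fst z, snd z ! l)" if "z \<in> set_pmf \<nu>" "l < n" for z l
    using that marg[OF that(2), symmetric] by (auto simp: pmf_positive)
  have qv: "pmf (q (fst z)) (snd z ! l) = pmf \<rho> (fst z, snd z ! l) / pmf \<rho>1 (fst z)" if "z \<in> set_pmf \<nu>" for z l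
    using pos1[OF that] pr[of "fst z" "snd z ! l"] by simp
  have pnu': "pmf \<nu>' z = pmf \<rho>1 (fst z) * (\<Prod>l<n. pmf \<rho> (fst z, snd z ! l) / pmf \<rho>1 (fst z))"
    if "z \<in> set_pmf \<nu>" for z
    using pn'[of "fst z" "snd z"] pmf_rep[OF len[OF that], of "q (fst z)"] qv[OF that] by simp
  have pospr: "0 < pmf \<nu>' z" if "z \<in> set_pmf \<nu>" for z
    unfolding pnu'[OF that] using pos1[OF that] posr[OF that] by (intro mult_pos_pos prod_pos divide_pos_pos) auto
  show sub: "set_pmf \<nu> \<subseteq> set_pmf \<nu>'"
  proof
    fix z assume "z \<in> set_pmf \<nu>"
    then show "z \<in> set_pmf \<nu>'" using pospr[of z] by (metis less_irrefl set_pmf_iff)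
  qed
  have lnv: "ln (pmf \<nu>' z) = ln (pmf \<rho>1 (fst z)) + (\<Sum>l<n. ln (pmf \<rho> (fst z, snd z ! l)) - ln (pmf \<rho>1 (fst z)))"
    if "z \<in> set_pmf \<nu>" for z
  proof -
    have "ln (\<Prod>l<n. pmf \<rho> (fst z, snd z ! l) / pmf \<rho>1 (fst z)) = (\<Sum>l<n. ln (pmf \<rho> (fst z, snd z ! l) / pmf \<rho>1 (fst z)))"
      apply (rule ln_prod)
       apply simp
      using pos1[OF that] posr[OF that] by (metis divide_pos_pos lessThan_iff less_irrefl)
    also have "\<dots> = (\<Sum>l<n. ln (pmf \<rho> (fst z, snd z ! l)) - ln (pmf \<rho>1 (fst z)))"
    proof (rule sum.cong[OF refl])
      fix l assume "l \<in> {..<n}"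
      then show "ln (pmf \<rho> (fst z, snd z ! l) / pmf \<rho>1 (fst z)) = ln (pmf \<rho> (fst z, snd z ! l)) - ln (pmf \<rho>1 (fst z))"
        using pos1[OF that] posr[OF that, of l] by (simp add: ln_div)
    qed
    finally have L: "ln (\<Prod>l<n. pmf \<rho> (fst z, snd z ! l) / pmf \<rho>1 (fst z)) = (\<Sum>l<n. ln (pmf \<rho> (fst z, snd z ! l)) - ln (pmf \<rho>1 (fst z)))" .
    have pp: "0 < (\<Prod>l<n. pmf \<rho> (fst z, snd z ! l) / pmf \<rho>1 (fst z))"
      using pos1[OF that] posr[OF that] by (metis divide_pos_pos lessThan_iff prod_pos)
    show ?thesis unfolding pnu'[OF that] ln_mult_pos[OF pos1[OF that] pp] L ..
  qed
  have "KL \<nu> \<nu>' = (\<Sum>z\<in>set_pmf \<nu>. pmf \<nu> z * ln (pmf \<nu> z) - pmf \<nu> z * ln (pmf \<rho>1 (fst z))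
         - (\<Sum>l<n. pmf \<nu> z * ln (pmf \<rho> (fst z, snd z ! l)) - pmf \<nu> z * ln (pmf \<rho>1 (fst z))))"
    unfolding KL_def
  proof (rule sum.cong[OF refl])
    fix z assume z: "z \<in> set_pmf \<nu>"
    have "0 < pmf \<nu> z" using z by (simp add: pmf_positive)
    then show "pmf \<nu> z * ln (pmf \<nu> z / pmf \<nu>' z) = pmf \<nu> z * ln (pmf \<nu> z) - pmf \<nu> z * ln (pmf \<rho>1 (fst z))
         - (\<Sum>l<n. pmf \<nu> z * ln (pmf \<rho> (fst z, snd z ! l)) - pmf \<nu> z * ln (pmf \<rho>1 (fst z)))"
    proof -
      have e: "pmf \<nu> z * ln (pmf \<nu>' z) = pmf \<nu> z * ln (pmf \<rho>1 (fst z)) + (\<Sum>l<n. pmf \<nu> z * ln (pmf \<rho> (fst z, snd z ! l)) - pmf \<nu> z * ln (pmf \<rho>1 (fst z)))"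
        by (simp only: lnv[OF z] distrib_left sum_distrib_left right_diff_distrib)
      have "pmf \<nu> z * ln (pmf \<nu> z / pmf \<nu>' z) = pmf \<nu> z * ln (pmf \<nu> z) - pmf \<nu> z * ln (pmf \<nu>' z)"
        using pospr[OF z] \<open>0 < pmf \<nu> z\<close> by (simp add: ln_div right_diff_distrib)
      then show ?thesis using e by linarith
    qed
  qed
  also have "\<dots> = (\<Sum>z\<in>set_pmf \<nu>. pmf \<nu> z * ln (pmf \<nu> z)) - (\<Sum>z\<in>set_pmf \<nu>. pmf \<nu> z * ln (pmf \<rho>1 (fst z)))
       - (\<Sum>l<n. (\<Sum>z\<in>set_pmf \<nu>. pmf \<nu> z * ln (pmf \<rho> (fst z, snd z ! l))) - (\<Sum>z\<in>set_pmf \<nu>. pmf \<nu> z * ln (pmf \<rho>1 (fst z))))"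
    by (simp add: sum_subtractf sum.swap[of _ "set_pmf \<nu>" "{..<n}"] sum_distrib_left)
  also have "(\<Sum>z\<in>set_pmf \<nu>. pmf \<nu> z * ln (pmf \<rho>1 (fst z))) = - ent \<rho>1"
    using sum_marg[OF fin, of "\<lambda>a. ln (pmf \<rho>1 a)" fst] marg1 by (simp add: ent_def sum_negf)
  also have "(\<Sum>l<n. (\<Sum>z\<in>set_pmf \<nu>. pmf \<nu> z * ln (pmf \<rho> (fst z, snd z ! l))) - - ent \<rho>1) = (\<Sum>l<n. - ent \<rho> + ent \<rho>1)"
  proof (rule sum.cong[OF refl])
    fix l assume "l \<in> {..<n}"
    then have "map_pmf (\<lambda>z. (fst z, snd z ! l)) \<nu> = \<rho>" using marg by simp
    then show "(\<Sum>z\<in>set_pmf \<nu>. pmf \<nu> z * ln (pmf \<rho> (fst z, snd z ! l))) - - ent \<rho>1 = - ent \<rho> + ent \<rho>1"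
      using sum_marg[OF fin, of "\<lambda>a. ln (pmf \<rho> a)" "\<lambda>z. (fst z, snd z ! l)"] by (simp add: ent_def sum_negf)
  qed
  also have "(\<Sum>z\<in>set_pmf \<nu>. pmf \<nu> z * ln (pmf \<nu> z)) = - ent \<nu>" by (simp add: ent_def sum_negf)
  finally show "KL \<nu> \<nu>' = n * (ent \<rho> - ent \<rho>1) + ent \<rho>1 - ent \<nu>" by (simp add: algebra_simps)
qed

lemma mi_rep:
  fixes \<phi> :: "'z list \<Rightarrow> 'v"
  assumes fp: "finite (set_pmf p)"
  shows "(\<Sum>i<m. ent (map_pmf \<phi> (replicate_pmf m p)) + ent p - ent (map_pmf (\<lambda>S. (\<phi> S, S ! i)) (replicate_pmf m p)))
           \<le> ent (map_pmf \<phi> (replicate_pmf m p))"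
proof (induction m arbitrary: \<phi>)
  case 0 then show ?case by (simp add: ent_nonneg)
next
  case (Suc m)
  let ?Q = "replicate_pmf m p"
  let ?\<mu> = "pair_pmf p ?Q"
  have finQ: "finite (set_pmf ?Q)" using fp by (rule finite_rep)
  have fin: "finite (set_pmf ?\<mu>)" using fp finQ by simp
  have rep: "replicate_pmf (Suc m) p = map_pmf (\<lambda>(x, xs). x # xs) ?\<mu>"
    unfolding rep_Suc_map pair_as_bind ..
  define \<psi> where "\<psi> \<omega> = \<phi> (fst \<omega> # snd \<omega>)" for \<omega>
  have chainB: "ent (map_pmf (\<lambda>\<omega>. (fst \<omega>, F \<omega>)) ?\<mu>) = ent p + (\<Sum>x\<in>set_pmf p. pmf p x * ent (map_pmf (\<lambda>xs. F (x, xs)) ?Q))"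
    for F :: "'z \<times> 'z list \<Rightarrow> 'w"
  proof -
    have "map_pmf (\<lambda>\<omega>. (fst \<omega>, F \<omega>)) ?\<mu> = bind_pmf p (\<lambda>x. map_pmf (Pair x) (map_pmf (\<lambda>xs. F (x, xs)) ?Q))"
      unfolding pair_as_bind map_bind_pmf map_pmf_comp by simp
    then show ?thesis by (simp add: ent_bind_Pair[OF fp] finQ)
  qed
  have s1: "(\<Sum>x\<in>set_pmf p. pmf p x) = 1" using sum_pmf_eq_1[OF fp] by simp
  define A where "A x j = ent (map_pmf (\<lambda>xs. \<phi> (x # xs)) ?Q) + ent p - ent (map_pmf (\<lambda>xs. (\<phi> (x # xs), xs ! j)) ?Q)" for x j
  have IH: "(\<Sum>j<m. A x j) \<le> ent (map_pmf (\<lambda>xs. \<phi> (x # xs)) ?Q)" for x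
    unfolding A_def using Suc.IH[of "\<lambda>xs. \<phi> (x # xs)"] by simp
  have Hpsi: "ent (map_pmf \<phi> (replicate_pmf (Suc m) p)) = ent (map_pmf \<psi> ?\<mu>)"
    unfolding rep map_pmf_comp \<psi>_def by (simp add: case_prod_beta)
  have T0: "ent (map_pmf (\<lambda>S. (\<phi> S, S ! 0)) (replicate_pmf (Suc m) p)) = ent (map_pmf (\<lambda>\<omega>. (\<psi> \<omega>, fst \<omega>)) ?\<mu>)"
    unfolding rep map_pmf_comp \<psi>_def by (simp add: case_prod_beta)
  have TS: "ent (map_pmf (\<lambda>S. (\<phi> S, S ! Suc j)) (replicate_pmf (Suc m) p)) = ent (map_pmf (\<lambda>\<omega>. (\<psi> \<omega>, snd \<omega> ! j)) ?\<mu>)" for j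
    unfolding rep map_pmf_comp \<psi>_def by (simp add: case_prod_beta)
  have step: "ent (map_pmf \<psi> ?\<mu>) + ent p - ent (map_pmf (\<lambda>\<omega>. (\<psi> \<omega>, snd \<omega> ! j)) ?\<mu>) \<le> (\<Sum>x\<in>set_pmf p. pmf p x * A x j)" for j
  proof -
    have sm: "ent (map_pmf (\<lambda>\<omega>. (\<psi> \<omega>, fst \<omega>, snd \<omega> ! j)) ?\<mu>) + ent (map_pmf \<psi> ?\<mu>)
        \<le> ent (map_pmf (\<lambda>\<omega>. (\<psi> \<omega>, fst \<omega>)) ?\<mu>) + ent (map_pmf (\<lambda>\<omega>. (\<psi> \<omega>, snd \<omega> ! j)) ?\<mu>)"
      by (rule H_submod[OF fin])
    have r1: "ent (map_pmf (\<lambda>\<omega>. (\<psi> \<omega>, fst \<omega>, snd \<omega> ! j)) ?\<mu>) = ent (map_pmf (\<lambda>\<omega>. (fst \<omega>, (\<psi> \<omega>, snd \<omega> ! j))) ?\<mu>)"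
      by (rule ent_cong_inj[where h = "\<lambda>(x, a, b). (a, x, b)"]) (auto simp: inj_on_def)
    have r2: "ent (map_pmf (\<lambda>\<omega>. (\<psi> \<omega>, fst \<omega>)) ?\<mu>) = ent (map_pmf (\<lambda>\<omega>. (fst \<omega>, \<psi> \<omega>)) ?\<mu>)"
      by (rule ent_swap)
    have c1: "ent (map_pmf (\<lambda>\<omega>. (fst \<omega>, \<psi> \<omega>)) ?\<mu>) = ent p + (\<Sum>x\<in>set_pmf p. pmf p x * ent (map_pmf (\<lambda>xs. \<phi> (x # xs)) ?Q))"
      using chainB[of \<psi>] by (simp add: \<psi>_def)
    have c2: "ent (map_pmf (\<lambda>\<omega>. (fst \<omega>, (\<psi> \<omega>, snd \<omega> ! j))) ?\<mu>) = ent p + (\<Sum>x\<in>set_pmf p. pmf p x * ent (map_pmf (\<lambda>xs. (\<phi> (x # xs), xs ! j)) ?Q))"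
      using chainB[of "\<lambda>\<omega>. (\<psi> \<omega>, snd \<omega> ! j)"] by (simp add: \<psi>_def)
    have "(\<Sum>x\<in>set_pmf p. pmf p x * A x j) = (\<Sum>x\<in>set_pmf p. pmf p x * ent (map_pmf (\<lambda>xs. \<phi> (x # xs)) ?Q))
        + (\<Sum>x\<in>set_pmf p. pmf p x) * ent p - (\<Sum>x\<in>set_pmf p. pmf p x * ent (map_pmf (\<lambda>xs. (\<phi> (x # xs), xs ! j)) ?Q))"
      unfolding A_def by (simp add: algebra_simps sum.distrib sum_subtractf sum_distrib_left sum_distrib_right)
    then show ?thesis using sm r1 r2 c1 c2 s1 by simp
  qed
  have "(\<Sum>i<Suc m. ent (map_pmf \<phi> (replicate_pmf (Suc m) p)) + ent p - ent (map_pmf (\<lambda>S. (\<phi> S, S ! i)) (replicate_pmf (Suc m) p)))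
      = (ent (map_pmf \<psi> ?\<mu>) + ent p - ent (map_pmf (\<lambda>\<omega>. (\<psi> \<omega>, fst \<omega>)) ?\<mu>))
        + (\<Sum>j<m. ent (map_pmf \<psi> ?\<mu>) + ent p - ent (map_pmf (\<lambda>\<omega>. (\<psi> \<omega>, snd \<omega> ! j)) ?\<mu>))"
    by (subst sum.lessThan_Suc_shift) (simp only: Hpsi T0 TS)
  also have "\<dots> \<le> (ent (map_pmf \<psi> ?\<mu>) + ent p - ent (map_pmf (\<lambda>\<omega>. (\<psi> \<omega>, fst \<omega>)) ?\<mu>))
        + (\<Sum>j<m. \<Sum>x\<in>set_pmf p. pmf p x * A x j)"
    by (intro add_left_mono sum_mono step)
  also have "(\<Sum>j<m. \<Sum>x\<in>set_pmf p. pmf p x * A x j) = (\<Sum>x\<in>set_pmf p. pmf p x * (\<Sum>j<m. A x j))"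
    by (subst sum.swap) (simp add: sum_distrib_left)
  also have "\<dots> \<le> (\<Sum>x\<in>set_pmf p. pmf p x * ent (map_pmf (\<lambda>xs. \<phi> (x # xs)) ?Q))"
    by (intro sum_mono mult_left_mono IH) auto
  also have "(\<Sum>x\<in>set_pmf p. pmf p x * ent (map_pmf (\<lambda>xs. \<phi> (x # xs)) ?Q)) = ent (map_pmf (\<lambda>\<omega>. (fst \<omega>, \<psi> \<omega>)) ?\<mu>) - ent p"
    using chainB[of \<psi>] by (simp add: \<psi>_def)
  finally show ?case using ent_swap[of \<psi> fst ?\<mu>] Hpsi by simp
qed

locale setting =
  fixes p :: "'z pmf" and Z :: "'z set" and adv :: "'z list \<Rightarrow> 'z list" and m k N :: nat
  assumes finZ: "finite Z" and pZ: "set_pmf p \<subseteq> Z"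
    and advS: "\<And>S. S \<in> set_pmf (replicate_pmf m p) \<Longrightarrow> length (adv S) = m \<and> set (adv S) \<subseteq> Z \<and> card {i. i < m \<and> adv S ! i \<noteq> S ! i} \<le> k"
    and Nm: "N \<le> m"
begin

definition "\<mu> = pair_pmf (replicate_pmf m p) (pmf_of_set (dl m N))"
definition "G s \<omega> = (take s (snd \<omega>), map (\<lambda>i. adv (fst \<omega>) ! i) (take s (snd \<omega>)))"
definition "Y s \<omega> = adv (fst \<omega>) ! (snd \<omega> ! s)"
definition "hh s = ent (map_pmf (\<lambda>\<omega>. (G s \<omega>, Y s \<omega>)) \<mu>) - ent (map_pmf (G s) \<mu>)"

lemma finp: "finite (set_pmf p)" using finite_subset[OF pZ finZ] .
lemma finA: "finite (set_pmf (replicate_pmf m p))" using finp by (rule finite_rep)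
lemma finU: "finite (set_pmf (pmf_of_set (dl m N)))" using Nm by (simp add: set_U finite_dl)
lemma finmu: "finite (set_pmf \<mu>)" unfolding \<mu>_def using finA finU by simp

lemma supp_mu: "\<omega> \<in> set_pmf \<mu> \<Longrightarrow> fst \<omega> \<in> set_pmf (replicate_pmf m p) \<and> snd \<omega> \<in> dl m N"
  unfolding \<mu>_def using Nm by (auto simp: set_U)

lemma supp_facts:
  assumes "\<omega> \<in> set_pmf \<mu>"
  shows "length (adv (fst \<omega>)) = m" "set (adv (fst \<omega>)) \<subseteq> Z" "length (snd \<omega>) = N"
    "distinct (snd \<omega>)" "set (snd \<omega>) \<subseteq> {..<m}" "length (fst \<omega>) = m"
  using supp_mu[OF assms] advS by (auto simp: dl_def set_replicate_pmf)

lemma Y_in_Z: "\<omega> \<in> set_pmf \<mu> \<Longrightarrow> s < N \<Longrightarrow> Y s \<omega> \<in> Z"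
proof -
  assume w: "\<omega> \<in> set_pmf \<mu>" and s: "s < N"
  have "snd \<omega> ! s \<in> set (snd \<omega>)" using s supp_facts(3)[OF w] by simp
  then have "snd \<omega> ! s < m" using supp_facts(5)[OF w] by auto
  then have "adv (fst \<omega>) ! (snd \<omega> ! s) \<in> set (adv (fst \<omega>))" using supp_facts(1)[OF w] by simp
  then show ?thesis using supp_facts(2)[OF w] unfolding Y_def by auto
qed

lemma swap_law:
  assumes "s \<le> s'" "s' < N"
  shows "map_pmf (\<lambda>\<omega>. \<Phi> (fst \<omega>) (take s (snd \<omega>)) (snd \<omega> ! s')) \<mu> = map_pmf (\<lambda>\<omega>. \<Phi> (fst \<omega>) (take s (snd \<omega>)) (snd \<omega> ! s)) \<mu>"
proof -
  have eq: "map_pmf (\<lambda>\<omega>. \<Phi> (fst \<omega>) (take s (snd \<omega>)) (snd \<omega> ! j)) \<mu>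
      = map_pmf (\<lambda>(S, c). \<Phi> S (fst c) (snd c)) (pair_pmf (replicate_pmf m p) (map_pmf (\<lambda>\<pi>. (take s \<pi>, \<pi> ! j)) (pmf_of_set (dl m N))))"
    for j
    unfolding \<mu>_def pair_map_pmf2 map_pmf_comp by (simp add: split_beta)
  show ?thesis unfolding eq map_swap_U[OF assms Nm] ..
qed

lemma hh_mono1:
  assumes "Suc s < N"
  shows "hh (Suc s) \<le> hh s"
proof -
  define \<phi> where "\<phi> = (\<lambda>(r :: nat list, v :: 'z list). (take s r, take s v))"
  have \<phi>G: "\<phi> (G (Suc s) \<omega>) = G s \<omega>" for \<omega>
    unfolding \<phi>_def G_def by (simp add: take_map min_def)
  have "hh (Suc s) \<le> ent (map_pmf (\<lambda>\<omega>. (\<phi> (G (Suc s) \<omega>), Y (Suc s) \<omega>)) \<mu>) - ent (map_pmf (\<lambda>\<omega>. \<phi> (G (Suc s) \<omega>)) \<mu>)"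
    unfolding hh_def by (rule H_cond_more[OF finmu])
  also have "\<dots> = ent (map_pmf (\<lambda>\<omega>. (G s \<omega>, Y (Suc s) \<omega>)) \<mu>) - ent (map_pmf (G s) \<mu>)"
    unfolding \<phi>G by simp
  also have "map_pmf (\<lambda>\<omega>. (G s \<omega>, Y (Suc s) \<omega>)) \<mu> = map_pmf (\<lambda>\<omega>. (G s \<omega>, Y s \<omega>)) \<mu>"
    using swap_law[of s "Suc s" "\<lambda>S r i. ((r, map (\<lambda>i. adv S ! i) r), adv S ! i)"] assms
    unfolding G_def Y_def by simp
  finally show ?thesis unfolding hh_def .
qed

lemma hh_mono:
  assumes "a \<le> b" "b < N"
  shows "hh b \<le> hh a"
  using assms
proof (induction b rule: dec_induct)
  case base then show ?case by simp
next
  case (step b)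
  then show ?case using hh_mono1[of b] by simp
qed

lemma hh_nonneg: "0 \<le> hh s"
  unfolding hh_def using H_mono[OF finmu, of "G s" "Y s"] by simp

lemma ent_Y: "s < N \<Longrightarrow> ent (map_pmf (Y s) \<mu>) \<le> ln (card Z)"
  by (rule ent_le_ln_card[OF finZ]) (auto simp: Y_in_Z)

lemma hh_le: "s < N \<Longrightarrow> hh s \<le> ln (card Z)"
  unfolding hh_def using H_subadd[OF finmu, of "G s" "Y s"] ent_Y[of s] by simp

lemma block:
  assumes L: "0 < L" and LN: "L * n < N"
  shows "\<exists>j<L. hh (j * n) - hh (j * n + n) \<le> ln (card Z) / L"
proof (rule ccontr)
  assume "\<not> ?thesis"
  then have gt: "\<And>j. j < L \<Longrightarrow> ln (card Z) / L < hh (j * n) - hh (j * n + n)" by auto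
  have "(\<Sum>j<L. ln (card Z) / L) < (\<Sum>j<L. hh (j * n) - hh (j * n + n))"
    using L by (intro sum_strict_mono) (auto intro: gt)
  also have "(\<Sum>j<L. hh (j * n) - hh (j * n + n)) = (\<Sum>j<L. (\<lambda>j. hh (j * n)) j - (\<lambda>j. hh (j * n)) (Suc j))"
    by (simp add: add.commute)
  also have "\<dots> = hh 0 - hh (L * n)" by (subst sum_lessThan_telescope') simp
  also have "\<dots> \<le> ln (card Z)" using hh_le[of 0] hh_nonneg[of "L * n"] LN by simp
  finally show False using L by simp
qed

definition "W t n \<omega> = map (\<lambda>i. adv (fst \<omega>) ! i) (take n (drop t (snd \<omega>)))"
definition "q t \<gamma> = map_pmf (Y t) (cnd \<mu> (G t) \<gamma>)"

lemma KL_bound: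
  assumes tn: "t + n < N"
  defines "\<nu> \<equiv> map_pmf (\<lambda>\<omega>. (G t \<omega>, W t n \<omega>)) \<mu>"
  defines "\<nu>' \<equiv> bind_pmf (map_pmf (G t) \<mu>) (\<lambda>\<gamma>. map_pmf (Pair \<gamma>) (replicate_pmf n (q t \<gamma>)))"
  shows "set_pmf \<nu> \<subseteq> set_pmf \<nu>'" "KL \<nu> \<nu>' \<le> n * (hh t - hh (t + n))"
proof -
  let ?\<rho> = "map_pmf (\<lambda>\<omega>. (G t \<omega>, Y t \<omega>)) \<mu>"
  let ?\<rho>1 = "map_pmf (G t) \<mu>"
  have fin: "finite (set_pmf \<nu>)" unfolding \<nu>_def using finmu by simp
  have len: "length (snd z) = n" if "z \<in> set_pmf \<nu>" for z
    using that supp_facts(3) tn unfolding \<nu>_def W_def by auto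
  have WY: "W t n \<omega> ! l = Y (t + l) \<omega>" if "\<omega> \<in> set_pmf \<mu>" "l < n" for \<omega> l
    using supp_facts(3)[OF that(1)] that(2) tn unfolding W_def Y_def by simp
  have marg: "map_pmf (\<lambda>z. (fst z, snd z ! l)) \<nu> = ?\<rho>" if l: "l < n" for l
  proof -
    have "map_pmf (\<lambda>z. (fst z, snd z ! l)) \<nu> = map_pmf (\<lambda>\<omega>. (G t \<omega>, Y (t + l) \<omega>)) \<mu>"
      unfolding \<nu>_def map_pmf_comp using WY l by (intro map_pmf_cong) auto
    also have "\<dots> = ?\<rho>"
      using swap_law[of t "t + l" "\<lambda>S r i. ((r, map (\<lambda>i. adv S ! i) r), adv S ! i)"] l tn
      unfolding G_def Y_def by simp
    finally show ?thesis .
  qed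
  have marg1: "map_pmf fst \<nu> = ?\<rho>1" unfolding \<nu>_def map_pmf_comp by simp
  have dis: "?\<rho> = bind_pmf ?\<rho>1 (\<lambda>\<gamma>. map_pmf (Pair \<gamma>) (q t \<gamma>))"
    unfolding q_def by (rule disint)
  note KP = KL_prod[OF fin len marg marg1 dis]
  show "set_pmf \<nu> \<subseteq> set_pmf \<nu>'" using KP(1) unfolding \<nu>'_def .
  have KLeq: "KL \<nu> \<nu>' = n * hh t + ent ?\<rho>1 - ent \<nu>"
    using KP(2) unfolding \<nu>'_def hh_def by simp
  define E where "E l = ent (map_pmf (\<lambda>\<omega>. (G t \<omega>, take l (W t n \<omega>))) \<mu>)" for l
  have E0: "E 0 = ent ?\<rho>1"
    unfolding E_def by (rule ent_cong_inj[where h = "\<lambda>g. (g, [])"]) (auto simp: inj_on_def)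
  have En: "E n = ent \<nu>"
  proof -
    have "map_pmf (\<lambda>\<omega>. (G t \<omega>, take n (W t n \<omega>))) \<mu> = \<nu>"
      unfolding \<nu>_def by (intro map_pmf_cong) (auto simp: W_def)
    then show ?thesis unfolding E_def by simp
  qed
  have step: "hh (t + n) \<le> E (Suc l) - E l" if l: "l < n" for l
  proof -
    define \<phi> where "\<phi> = (\<lambda>(r :: nat list, v :: 'z list). ((take t r, take t v), drop t v))"
    have \<phi>G: "\<phi> (G (t + l) \<omega>) = (G t \<omega>, take l (W t n \<omega>))" for \<omega>
      using l unfolding \<phi>_def G_def W_def by (simp add: take_map drop_map min_def take_drop add.commute)
    have e1: "E (Suc l) = ent (map_pmf (\<lambda>\<omega>. (\<phi> (G (t + l) \<omega>), Y (t + l) \<omega>)) \<mu>)"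
      unfolding E_def \<phi>G
    proof (rule ent_cong_inj[where h = "\<lambda>((g, ys), y). (g, ys @ [y])"])
      show "inj_on (\<lambda>((g, ys), y). (g, ys @ [y])) ((\<lambda>\<omega>. ((G t \<omega>, take l (W t n \<omega>)), Y (t + l) \<omega>)) ` set_pmf \<mu>)"
        by (auto simp: inj_on_def)
      fix \<omega> assume w: "\<omega> \<in> set_pmf \<mu>"
      have "length (W t n \<omega>) = n" using supp_facts(3)[OF w] tn unfolding W_def by simp
      then have "take (Suc l) (W t n \<omega>) = take l (W t n \<omega>) @ [W t n \<omega> ! l]"
        using l by (simp add: take_Suc_conv_app_nth)
      then show "(G t \<omega>, take (Suc l) (W t n \<omega>)) = (\<lambda>((g, ys), y). (g, ys @ [y])) ((G t \<omega>, take l (W t n \<omega>)), Y (t + l) \<omega>)"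
        using WY[OF w l] by simp
    qed
    have e2: "E l = ent (map_pmf (\<lambda>\<omega>. \<phi> (G (t + l) \<omega>)) \<mu>)"
      unfolding E_def \<phi>G ..
    have "hh (t + l) \<le> E (Suc l) - E l"
      unfolding e1 e2 hh_def by (rule H_cond_more[OF finmu])
    moreover have "hh (t + n) \<le> hh (t + l)" using l tn by (intro hh_mono) auto
    ultimately show ?thesis by simp
  qed
  have "n * hh (t + n) \<le> (\<Sum>l<n. E (Suc l) - E l)"
    using sum_mono[of "{..<n}" "\<lambda>_. hh (t + n)" "\<lambda>l. E (Suc l) - E l"] step by simp
  also have "\<dots> = ent \<nu> - ent ?\<rho>1" by (simp add: sum_lessThan_telescope E0 En)
  finally show "KL \<nu> \<nu>' \<le> n * (hh t - hh (t + n))" using KLeq by (simp add: algebra_simps)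
qed

end

context setting
begin

definition "Sj t \<omega> = fst \<omega> ! (snd \<omega> ! t)"
definition "u t \<gamma> = map_pmf (Sj t) (cnd \<mu> (G t) \<gamma>)"
definition "IWS t = ent (map_pmf (G t) \<mu>) + ent p - ent (map_pmf (\<lambda>\<omega>. (G t \<omega>, Sj t \<omega>)) \<mu>)"

lemma mu_swap: "\<mu> = map_pmf (\<lambda>(x, y). (y, x)) (bind_pmf (pmf_of_set (dl m N)) (\<lambda>\<pi>. map_pmf (Pair \<pi>) (replicate_pmf m p)))"
  unfolding \<mu>_def by (rule pair_as_bind2)

lemma law_C:
  fixes C :: "nat list \<Rightarrow> 'c" and F :: "'c \<Rightarrow> 'z list \<Rightarrow> 'd"
  shows "map_pmf (\<lambda>\<omega>. (C (snd \<omega>), F (C (snd \<omega>)) (fst \<omega>))) \<mu>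
     = bind_pmf (map_pmf C (pmf_of_set (dl m N))) (\<lambda>c. map_pmf (Pair c) (map_pmf (F c) (replicate_pmf m p)))"
  unfolding mu_swap map_pmf_comp map_bind_pmf bind_map_pmf by simp

lemma law_Sj:
  assumes "t < N"
  shows "map_pmf (Sj t) \<mu> = p"
proof -
  have "map_pmf (Sj t) \<mu> = bind_pmf (pmf_of_set (dl m N)) (\<lambda>\<pi>. map_pmf (\<lambda>S. S ! (\<pi> ! t)) (replicate_pmf m p))"
    unfolding mu_swap map_pmf_comp map_bind_pmf Sj_def by simp
  also have "\<dots> = bind_pmf (pmf_of_set (dl m N)) (\<lambda>\<pi>. p)"
  proof (rule bind_pmf_cong[OF refl])
    fix \<pi> assume "\<pi> \<in> set_pmf (pmf_of_set (dl m N))"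
    then have "\<pi> \<in> dl m N" using Nm by (simp add: set_U)
    then have "\<pi> ! t < m" using assms unfolding dl_def by (auto intro: nth_mem)
    then show "map_pmf (\<lambda>S. S ! (\<pi> ! t)) (replicate_pmf m p) = p" by (rule map_nth_rep)
  qed
  finally show ?thesis by simp
qed

lemma ent_V:
  assumes "r \<in> dl m t"
  shows "ent (map_pmf (\<lambda>S. map (\<lambda>i. adv S ! i) r) (replicate_pmf m p)) \<le> t * ln (card Z)"
proof -
  have ZZ: "Z \<noteq> {}" using pZ set_pmf_not_empty[of p] by blast
  have "ent (map_pmf (\<lambda>S. map (\<lambda>i. adv S ! i) r) (replicate_pmf m p)) \<le> ln (card {xs. set xs \<subseteq> Z \<and> length xs = t})"
  proof (rule ent_le_ln_card)
    show "finite {xs. set xs \<subseteq> Z \<and> length xs = t}" using finZ by (rule finite_lists_length_eq)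
    show "set_pmf (map_pmf (\<lambda>S. map (\<lambda>i. adv S ! i) r) (replicate_pmf m p)) \<subseteq> {xs. set xs \<subseteq> Z \<and> length xs = t}"
    proof
      fix xs assume "xs \<in> set_pmf (map_pmf (\<lambda>S. map (\<lambda>i. adv S ! i) r) (replicate_pmf m p))"
      then obtain S where S: "S \<in> set_pmf (replicate_pmf m p)" "xs = map (\<lambda>i. adv S ! i) r" by auto
      have "\<And>i. i \<in> set r \<Longrightarrow> adv S ! i \<in> Z"
        using advS[OF S(1)] assms unfolding dl_def by (auto intro: nth_mem)
      then show "xs \<in> {xs. set xs \<subseteq> Z \<and> length xs = t}" using S(2) assms unfolding dl_def by auto
    qed
  qed
  also have "\<dots> = t * ln (card Z)"
    using finZ by (simp add: card_lists_length_eq ln_realpow)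
  finally show ?thesis .
qed

lemma card_avail: "r \<in> dl m t \<Longrightarrow> card ({..<m} - set r) = m - t"
  unfolding dl_def by (auto simp: card_Diff_subset distinct_card)

lemma avail_ne: "r \<in> dl m t \<Longrightarrow> t < m \<Longrightarrow> {..<m} - set r \<noteq> {}"
  using card_avail by (metis card.empty zero_less_diff less_irrefl)

lemma IWS_bound:
  assumes tN: "t < N"
  shows "IWS t \<le> t * ln (card Z) / (m - t)"
proof -
  have tm: "t < m" using tN Nm by simp
  let ?C = "\<lambda>\<pi> :: nat list. (take t \<pi>, \<pi> ! t)"
  let ?C' = "map_pmf ?C (pmf_of_set (dl m N))"
  let ?V = "\<lambda>r S. map (\<lambda>i. adv S ! i) r"
  define J where "J c = ent (map_pmf (?V (fst c)) (replicate_pmf m p)) + ent p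
       - ent (map_pmf (\<lambda>S. (?V (fst c) S, S ! snd c)) (replicate_pmf m p))" for c
  have finC: "finite (set_pmf ?C')" using finU by simp
  have sm: "ent (map_pmf (\<lambda>\<omega>. (G t \<omega>, snd \<omega> ! t, Sj t \<omega>)) \<mu>) + ent (map_pmf (G t) \<mu>)
      \<le> ent (map_pmf (\<lambda>\<omega>. (G t \<omega>, snd \<omega> ! t)) \<mu>) + ent (map_pmf (\<lambda>\<omega>. (G t \<omega>, Sj t \<omega>)) \<mu>)"
    by (rule H_submod[OF finmu])
  have r1: "ent (map_pmf (\<lambda>\<omega>. (G t \<omega>, snd \<omega> ! t)) \<mu>) = ent (map_pmf (\<lambda>\<omega>. (?C (snd \<omega>), ?V (fst (?C (snd \<omega>))) (fst \<omega>))) \<mu>)"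
    by (rule ent_cong_inj[where h = "\<lambda>((r, i), v). ((r, v), i)"]) (auto simp: inj_on_def G_def)
  have r2: "ent (map_pmf (\<lambda>\<omega>. (G t \<omega>, snd \<omega> ! t, Sj t \<omega>)) \<mu>)
      = ent (map_pmf (\<lambda>\<omega>. (?C (snd \<omega>), (\<lambda>c S. (?V (fst c) S, S ! snd c)) (?C (snd \<omega>)) (fst \<omega>))) \<mu>)"
    by (rule ent_cong_inj[where h = "\<lambda>((r, i), v, x). ((r, v), i, x)"]) (auto simp: inj_on_def G_def Sj_def)
  have c1: "ent (map_pmf (\<lambda>\<omega>. (?C (snd \<omega>), ?V (fst (?C (snd \<omega>))) (fst \<omega>))) \<mu>)
      = ent ?C' + (\<Sum>c\<in>set_pmf ?C'. pmf ?C' c * ent (map_pmf (?V (fst c)) (replicate_pmf m p)))"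
    using law_C[of ?C "\<lambda>c. ?V (fst c)"] by (simp add: ent_bind_Pair[OF finC] finA)
  have c2: "ent (map_pmf (\<lambda>\<omega>. (?C (snd \<omega>), (\<lambda>c S. (?V (fst c) S, S ! snd c)) (?C (snd \<omega>)) (fst \<omega>))) \<mu>)
      = ent ?C' + (\<Sum>c\<in>set_pmf ?C'. pmf ?C' c * ent (map_pmf (\<lambda>S. (?V (fst c) S, S ! snd c)) (replicate_pmf m p)))"
    using law_C[of ?C "\<lambda>c S. (?V (fst c) S, S ! snd c)"] by (simp add: ent_bind_Pair[OF finC] finA)
  have s1: "(\<Sum>c\<in>set_pmf ?C'. pmf ?C' c) = 1" using sum_pmf_eq_1[OF finC] by simp
  have "IWS t \<le> (\<Sum>c\<in>set_pmf ?C'. pmf ?C' c * J c)"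
  proof -
    have "(\<Sum>c\<in>set_pmf ?C'. pmf ?C' c * J c) = (\<Sum>c\<in>set_pmf ?C'. pmf ?C' c * ent (map_pmf (?V (fst c)) (replicate_pmf m p)))
         + (\<Sum>c\<in>set_pmf ?C'. pmf ?C' c) * ent p
         - (\<Sum>c\<in>set_pmf ?C'. pmf ?C' c * ent (map_pmf (\<lambda>S. (?V (fst c) S, S ! snd c)) (replicate_pmf m p)))"
      unfolding J_def by (simp add: algebra_simps sum.distrib sum_subtractf sum_distrib_left sum_distrib_right)
    then show ?thesis using sm r1 r2 c1 c2 s1 unfolding IWS_def by simp
  qed
  also have "(\<Sum>c\<in>set_pmf ?C'. pmf ?C' c * J c) = measure_pmf.expectation ?C' J"
    by (rule expect_sum[OF finC, symmetric])
  also have "?C' = bind_pmf (pmf_of_set (dl m t)) (\<lambda>r. map_pmf (Pair r) (pmf_of_set ({..<m} - set r)))"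
    by (rule map_head_U[OF tN Nm])
  also have "measure_pmf.expectation \<dots> J
      = measure_pmf.expectation (pmf_of_set (dl m t)) (\<lambda>r. measure_pmf.expectation (map_pmf (Pair r) (pmf_of_set ({..<m} - set r))) J)"
  proof (rule expect_bind)
    show "finite (set_pmf (pmf_of_set (dl m t)))" using tm by (simp add: set_U finite_dl)
    fix r assume "r \<in> set_pmf (pmf_of_set (dl m t))"
    then have "r \<in> dl m t" using tm by (simp add: set_U)
    then show "finite (set_pmf (map_pmf (Pair r) (pmf_of_set ({..<m} - set r))))"
      using avail_ne[of r t] tm by (simp add: set_pmf_of_set)
  qed
  also have "\<dots> \<le> measure_pmf.expectation (pmf_of_set (dl m t)) (\<lambda>r. t * ln (card Z) / (m - t))"
  proof -
    have pw: "measure_pmf.expectation (map_pmf (Pair r) (pmf_of_set ({..<m} - set r))) J \<le> t * ln (card Z) / (m - t)"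
      if r: "r \<in> dl m t" for r
    proof -
      have cr: "card ({..<m} - set r) = m - t"
        using r unfolding dl_def by (auto simp: card_Diff_subset distinct_card)
      have ne: "{..<m} - set r \<noteq> {}" using cr tm by (metis card.empty zero_less_diff less_irrefl)
      have J0: "0 \<le> J (r, i)" if "i < m" for i
      proof -
        have "ent (map_pmf (\<lambda>S. (?V r S, S ! i)) (replicate_pmf m p)) \<le> ent (map_pmf (?V r) (replicate_pmf m p)) + ent (map_pmf (\<lambda>S. S ! i) (replicate_pmf m p))"
          by (rule H_subadd[OF finA])
        then show ?thesis unfolding J_def using map_nth_rep[OF that, of p] by simp
      qed
      have "measure_pmf.expectation (map_pmf (Pair r) (pmf_of_set ({..<m} - set r))) J
          = (\<Sum>i\<in>{..<m} - set r. J (r, i)) / (m - t)"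
        using ne cr by (simp add: integral_pmf_of_set)
      also have "(\<Sum>i\<in>{..<m} - set r. J (r, i)) \<le> (\<Sum>i<m. J (r, i))"
        by (rule sum_mono2) (auto simp: J0)
      also have "(\<Sum>i<m. J (r, i)) \<le> ent (map_pmf (?V r) (replicate_pmf m p))"
        unfolding J_def using mi_rep[OF finp, of "?V r" m] by simp
      also have "\<dots> \<le> t * ln (card Z)" by (rule ent_V[OF r])
      finally show ?thesis using tm by (simp add: divide_right_mono)
    qed
    show ?thesis
      using pw tm finite_dl by (intro integral_mono_AE) (auto simp: AE_measure_pmf_iff set_U integrable_measure_pmf_finite)
  qed
  also have "\<dots> = t * ln (card Z) / (m - t)" by simp
  finally show ?thesis .
qed

end

lemma KL_test2:
  assumes fin: "finite (set_pmf Q)" and sub: "set_pmf P \<subseteq> set_pmf Q"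
    and h0: "\<And>x. 0 \<le> h x" and h1: "\<And>x. h x \<le> 1"
  shows "measure_pmf.expectation Q h - measure_pmf.expectation P h \<le> sqrt (KL P Q)"
proof -
  have finP: "finite (set_pmf P)" using fin sub finite_subset by blast
  have "measure_pmf.expectation P (\<lambda>x. 1 - h x) - measure_pmf.expectation Q (\<lambda>x. 1 - h x) \<le> sqrt (KL P Q)"
    by (rule KL_test[OF fin sub]) (use h0 h1 in auto)
  moreover have "measure_pmf.expectation P (\<lambda>x. 1 - h x) = 1 - measure_pmf.expectation P h"
    using finP by (subst Bochner_Integration.integral_diff) (auto intro: integrable_measure_pmf_finite)
  moreover have "measure_pmf.expectation Q (\<lambda>x. 1 - h x) = 1 - measure_pmf.expectation Q h"
    using fin by (subst Bochner_Integration.integral_diff) (auto intro: integrable_measure_pmf_finite)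
  ultimately show ?thesis by simp
qed

lemma prob_cnd:
  assumes fin: "finite (set_pmf \<mu>)" and g: "\<gamma> \<in> set_pmf (map_pmf W \<mu>)"
  shows "measure_pmf.prob (cnd \<mu> W \<gamma>) E = measure_pmf.prob \<mu> (E \<inter> {\<omega>. W \<omega> = \<gamma>}) / measure_pmf.prob \<mu> {\<omega>. W \<omega> = \<gamma>}"
proof -
  let ?F = "set_pmf \<mu>"
  have P: "pmf (map_pmf W \<mu>) \<gamma> = measure_pmf.prob \<mu> {\<omega>. W \<omega> = \<gamma>}" by (simp add: pmf_map vimage_def)
  have "measure_pmf.prob (cnd \<mu> W \<gamma>) E = (\<Sum>x\<in>E \<inter> ?F. pmf (cnd \<mu> W \<gamma>) x)"
    by (rule prob_sumF[OF fin]) (simp add: set_cnd[OF g])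
  also have "\<dots> = (\<Sum>x\<in>E \<inter> ?F. if W x = \<gamma> then pmf \<mu> x / pmf (map_pmf W \<mu>) \<gamma> else 0)"
    by (intro sum.cong refl) (simp add: pmf_cnd[OF g])
  also have "\<dots> = (\<Sum>x\<in>{x\<in>E \<inter> ?F. W x = \<gamma>}. pmf \<mu> x) / pmf (map_pmf W \<mu>) \<gamma>"
  proof -
    have finEF: "finite (E \<inter> ?F)" using fin by simp
    show ?thesis unfolding sum.inter_filter[OF finEF, symmetric] sum_divide_distrib ..
  qed
  also have "{x\<in>E \<inter> ?F. W x = \<gamma>} = (E \<inter> {\<omega>. W \<omega> = \<gamma>}) \<inter> ?F" by auto
  also have "(\<Sum>x\<in>(E \<inter> {\<omega>. W \<omega> = \<gamma>}) \<inter> ?F. pmf \<mu> x) = measure_pmf.prob \<mu> (E \<inter> {\<omega>. W \<omega> = \<gamma>})"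
    by (rule prob_sumF[OF fin, symmetric]) simp
  finally show ?thesis using P by simp
qed

lemma sum_ind:
  fixes f :: "'a \<Rightarrow> real"
  assumes "finite F"
  shows "(\<Sum>S\<in>{S. P S} \<inter> F. f S) = (\<Sum>S\<in>F. f S * (if P S then 1 else 0))"
proof -
  have "(\<Sum>S\<in>F. f S * (if P S then 1 else 0)) = (\<Sum>S\<in>F. if P S then f S else 0)"
    by (intro sum.cong) auto
  also have "\<dots> = (\<Sum>S\<in>{S\<in>F. P S}. f S)" by (rule sum.inter_filter[OF assms, symmetric])
  also have "{S\<in>F. P S} = {S. P S} \<inter> F" by auto
  finally show ?thesis ..
qed

context setting
begin

lemma prob_mu_C:
  assumes tN: "t < N"
  shows "measure_pmf.prob \<mu> {\<omega>. \<Phi> (take t (snd \<omega>), snd \<omega> ! t) (fst \<omega>)}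
    = measure_pmf.expectation (pmf_of_set (dl m t)) (\<lambda>r. measure_pmf.expectation (pmf_of_set ({..<m} - set r))
         (\<lambda>i. measure_pmf.prob (replicate_pmf m p) {S. \<Phi> (r, i) S}))"
proof -
  have tm: "t < m" using tN Nm by simp
  let ?C = "\<lambda>\<pi> :: nat list. (take t \<pi>, \<pi> ! t)"
  let ?C' = "map_pmf ?C (pmf_of_set (dl m N))"
  have finC: "finite (set_pmf ?C')" using finU by simp
  have lc: "map_pmf (\<lambda>\<omega>. (?C (snd \<omega>), fst \<omega>)) \<mu> = bind_pmf ?C' (\<lambda>c. map_pmf (Pair c) (replicate_pmf m p))"
    using law_C[of ?C "\<lambda>c S. S"] by simp
  have "measure_pmf.prob \<mu> {\<omega>. \<Phi> (?C (snd \<omega>)) (fst \<omega>)} = measure_pmf.prob (map_pmf (\<lambda>\<omega>. (?C (snd \<omega>), fst \<omega>)) \<mu>) {(c, S). \<Phi> c S}"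
    by (simp add: vimage_def split_beta)
  also have "\<dots> = measure_pmf.prob (bind_pmf ?C' (\<lambda>c. map_pmf (Pair c) (replicate_pmf m p))) {(c, S). \<Phi> c S}"
    unfolding lc ..
  also have "\<dots> = measure_pmf.expectation (bind_pmf ?C' (\<lambda>c. map_pmf (Pair c) (replicate_pmf m p))) (indicator {(c, S). \<Phi> c S})"
    by simp
  also have "\<dots> = measure_pmf.expectation ?C' (\<lambda>c. measure_pmf.expectation (map_pmf (Pair c) (replicate_pmf m p)) (indicator {(c, S). \<Phi> c S}))"
    by (rule expect_bind[OF finC]) (simp add: finA)
  also have "\<dots> = measure_pmf.expectation ?C' (\<lambda>c. measure_pmf.prob (replicate_pmf m p) {S. \<Phi> c S})"
    by (simp add: vimage_def)
  also have "?C' = bind_pmf (pmf_of_set (dl m t)) (\<lambda>r. map_pmf (Pair r) (pmf_of_set ({..<m} - set r)))"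
    by (rule map_head_U[OF tN Nm])
  also have "measure_pmf.expectation \<dots> (\<lambda>c. measure_pmf.prob (replicate_pmf m p) {S. \<Phi> c S})
      = measure_pmf.expectation (pmf_of_set (dl m t)) (\<lambda>r. measure_pmf.expectation (map_pmf (Pair r) (pmf_of_set ({..<m} - set r))) (\<lambda>c. measure_pmf.prob (replicate_pmf m p) {S. \<Phi> c S}))"
  proof (rule expect_bind)
    show "finite (set_pmf (pmf_of_set (dl m t)))" using tm by (simp add: set_U finite_dl)
    fix r assume "r \<in> set_pmf (pmf_of_set (dl m t))"
    then have "r \<in> dl m t" using tm by (simp add: set_U)
    then show "finite (set_pmf (map_pmf (Pair r) (pmf_of_set ({..<m} - set r))))"
      using avail_ne[of r t] tm by (simp add: set_pmf_of_set)
  qed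
  finally show ?thesis by simp
qed

lemma rho_bound:
  assumes tN: "t < N" and g: "\<gamma> \<in> set_pmf (map_pmf (G t) \<mu>)"
  shows "measure_pmf.prob (cnd \<mu> (G t) \<gamma>) {\<omega>. Sj t \<omega> \<noteq> Y t \<omega>} \<le> k / (m - t)"
proof -
  have tm: "t < m" using tN Nm by simp
  let ?V = "\<lambda>r S. map (\<lambda>i. adv S ! i) r"
  let ?A = "replicate_pmf m p"
  define \<Phi>1 where "\<Phi>1 c S = ((fst c, ?V (fst c) S) = \<gamma> \<and> S ! snd c \<noteq> adv S ! snd c)" for c S
  define \<Phi>2 where "\<Phi>2 c S = ((fst c, ?V (fst c) S) = \<gamma>)" for c :: "nat list \<times> nat" and S :: "'z list"
  have e1: "{\<omega>. Sj t \<omega> \<noteq> Y t \<omega>} \<inter> {\<omega>. G t \<omega> = \<gamma>} = {\<omega>. \<Phi>1 (take t (snd \<omega>), snd \<omega> ! t) (fst \<omega>)}"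
    unfolding \<Phi>1_def Sj_def Y_def G_def by auto
  have e2: "{\<omega>. G t \<omega> = \<gamma>} = {\<omega>. \<Phi>2 (take t (snd \<omega>), snd \<omega> ! t) (fst \<omega>)}"
    unfolding \<Phi>2_def G_def by auto
  have pw: "measure_pmf.expectation (pmf_of_set ({..<m} - set r)) (\<lambda>i. measure_pmf.prob ?A {S. \<Phi>1 (r, i) S})
      \<le> k / (m - t) * measure_pmf.expectation (pmf_of_set ({..<m} - set r)) (\<lambda>i. measure_pmf.prob ?A {S. \<Phi>2 (r, i) S})"
    if r: "r \<in> dl m t" for r
  proof -
    let ?B = "{..<m} - set r"
    let ?F = "set_pmf ?A"
    have ne: "?B \<noteq> {}" using avail_ne[OF r tm] .
    have cB: "card ?B = m - t" using card_avail[OF r] .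
    have fB: "finite ?B" by simp
    have c2: "measure_pmf.prob ?A {S. \<Phi>2 (r, i) S} = measure_pmf.prob ?A {S. \<Phi>2 (r, 0) S}" for i
      unfolding \<Phi>2_def by simp
    have "(\<Sum>i\<in>?B. measure_pmf.prob ?A {S. \<Phi>1 (r, i) S}) = (\<Sum>i\<in>?B. \<Sum>S\<in>?F. pmf ?A S * (if \<Phi>1 (r, i) S then 1 else 0))"
    proof (rule sum.cong[OF refl])
      fix i
      have "measure_pmf.prob ?A {S. \<Phi>1 (r, i) S} = (\<Sum>S\<in>{S. \<Phi>1 (r, i) S} \<inter> ?F. pmf ?A S)"
        by (rule prob_sumF[OF finA]) simp
      also have "\<dots> = (\<Sum>S\<in>?F. pmf ?A S * (if \<Phi>1 (r, i) S then 1 else 0))"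
        by (rule sum_ind[OF finA])
      finally show "measure_pmf.prob ?A {S. \<Phi>1 (r, i) S} = (\<Sum>S\<in>?F. pmf ?A S * (if \<Phi>1 (r, i) S then 1 else 0))" .
    qed
    also have "\<dots> = (\<Sum>S\<in>?F. pmf ?A S * (\<Sum>i\<in>?B. if \<Phi>1 (r, i) S then 1 else 0))"
      by (subst sum.swap) (simp add: sum_distrib_left)
    also have "\<dots> \<le> (\<Sum>S\<in>?F. pmf ?A S * (if \<Phi>2 (r, 0) S then real k else 0))"
    proof (rule sum_mono)
      fix S assume S: "S \<in> ?F"
      have "(\<Sum>i\<in>?B. if \<Phi>1 (r, i) S then 1 else 0 :: real) \<le> (if \<Phi>2 (r, 0) S then real k else 0)"
      proof (cases "\<Phi>2 (r, 0) S")
        case True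
        have "(\<Sum>i\<in>?B. if \<Phi>1 (r, i) S then 1 else 0 :: real) = real (card {i\<in>?B. \<Phi>1 (r, i) S})"
          using fB by (simp add: sum.inter_filter[symmetric])
        also have "card {i\<in>?B. \<Phi>1 (r, i) S} \<le> card {i. i < m \<and> adv S ! i \<noteq> S ! i}"
          by (rule card_mono) (auto simp: \<Phi>1_def)
        also have "\<dots> \<le> k" using advS[OF S] by simp
        finally show ?thesis using True by simp
      next
        case False
        then have "\<And>i. \<not> \<Phi>1 (r, i) S" unfolding \<Phi>1_def \<Phi>2_def by simp
        then show ?thesis using False by simp
      qed
      then show "pmf ?A S * (\<Sum>i\<in>?B. if \<Phi>1 (r, i) S then 1 else 0) \<le> pmf ?A S * (if \<Phi>2 (r, 0) S then real k else 0)"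
        by (intro mult_left_mono) auto
    qed
    also have "\<dots> = k * measure_pmf.prob ?A {S. \<Phi>2 (r, 0) S}"
    proof -
      have "measure_pmf.prob ?A {S. \<Phi>2 (r, 0) S} = (\<Sum>S\<in>{S. \<Phi>2 (r, 0) S} \<inter> ?F. pmf ?A S)"
        by (rule prob_sumF[OF finA]) simp
      also have "\<dots> = (\<Sum>S\<in>?F. pmf ?A S * (if \<Phi>2 (r, 0) S then 1 else 0))"
        by (rule sum_ind[OF finA])
      finally have P: "measure_pmf.prob ?A {S. \<Phi>2 (r, 0) S} = (\<Sum>S\<in>?F. pmf ?A S * (if \<Phi>2 (r, 0) S then 1 else 0))" .
      have "(\<Sum>S\<in>?F. pmf ?A S * (if \<Phi>2 (r, 0) S then real k else 0)) = real k * (\<Sum>S\<in>?F. pmf ?A S * (if \<Phi>2 (r, 0) S then 1 else 0))"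
        by (subst sum_distrib_left) (intro sum.cong; simp)
      then show ?thesis using P by simp
    qed
    finally have sB: "(\<Sum>i\<in>?B. measure_pmf.prob ?A {S. \<Phi>1 (r, i) S}) \<le> k * measure_pmf.prob ?A {S. \<Phi>2 (r, 0) S}" .
    have "measure_pmf.expectation (pmf_of_set ?B) (\<lambda>i. measure_pmf.prob ?A {S. \<Phi>1 (r, i) S})
        = (\<Sum>i\<in>?B. measure_pmf.prob ?A {S. \<Phi>1 (r, i) S}) / (m - t)"
      using ne cB by (simp add: integral_pmf_of_set)
    also have "\<dots> \<le> k * measure_pmf.prob ?A {S. \<Phi>2 (r, 0) S} / (m - t)"
      using sB tm by (simp add: divide_right_mono)
    also have "\<dots> = k / (m - t) * measure_pmf.expectation (pmf_of_set ?B) (\<lambda>i. measure_pmf.prob ?A {S. \<Phi>2 (r, i) S})"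
    proof -
      have "(\<lambda>i. measure_pmf.prob ?A {S. \<Phi>2 (r, i) S}) = (\<lambda>i. measure_pmf.prob ?A {S. \<Phi>2 (r, 0) S})"
        by (rule ext) (rule c2)
      then show ?thesis by simp
    qed
    finally show ?thesis .
  qed
  have num: "measure_pmf.prob \<mu> ({\<omega>. Sj t \<omega> \<noteq> Y t \<omega>} \<inter> {\<omega>. G t \<omega> = \<gamma>}) \<le> k / (m - t) * measure_pmf.prob \<mu> {\<omega>. G t \<omega> = \<gamma>}"
  proof -
    have "measure_pmf.prob \<mu> ({\<omega>. Sj t \<omega> \<noteq> Y t \<omega>} \<inter> {\<omega>. G t \<omega> = \<gamma>})
       = measure_pmf.expectation (pmf_of_set (dl m t)) (\<lambda>r. measure_pmf.expectation (pmf_of_set ({..<m} - set r)) (\<lambda>i. measure_pmf.prob ?A {S. \<Phi>1 (r, i) S}))"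
      unfolding e1 by (rule prob_mu_C[OF tN])
    also have "\<dots> \<le> measure_pmf.expectation (pmf_of_set (dl m t)) (\<lambda>r. k / (m - t) * measure_pmf.expectation (pmf_of_set ({..<m} - set r)) (\<lambda>i. measure_pmf.prob ?A {S. \<Phi>2 (r, i) S}))"
      using pw tm finite_dl by (intro integral_mono_AE) (auto simp: AE_measure_pmf_iff set_U integrable_measure_pmf_finite)
    also have "\<dots> = k / (m - t) * measure_pmf.expectation (pmf_of_set (dl m t)) (\<lambda>r. measure_pmf.expectation (pmf_of_set ({..<m} - set r)) (\<lambda>i. measure_pmf.prob ?A {S. \<Phi>2 (r, i) S}))"
      by simp
    also have "measure_pmf.expectation (pmf_of_set (dl m t)) (\<lambda>r. measure_pmf.expectation (pmf_of_set ({..<m} - set r)) (\<lambda>i. measure_pmf.prob ?A {S. \<Phi>2 (r, i) S}))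
       = measure_pmf.prob \<mu> {\<omega>. G t \<omega> = \<gamma>}"
      unfolding e2 by (rule prob_mu_C[OF tN, symmetric])
    finally show ?thesis .
  qed
  have pos: "0 < measure_pmf.prob \<mu> {\<omega>. G t \<omega> = \<gamma>}"
    using g by (auto intro: measure_pmf_posI)
  show ?thesis
    unfolding prob_cnd[OF finmu g] using num pos by (simp add: divide_le_eq)
qed

end

context setting
begin

lemma fin_cnd: "\<gamma> \<in> set_pmf (map_pmf V \<mu>) \<Longrightarrow> finite (set_pmf (cnd \<mu> V \<gamma>))"
  using finmu by (simp add: set_cnd)

lemma tv_avg:
  assumes tN: "t < N"
  shows "(\<Sum>\<gamma>\<in>set_pmf (map_pmf (G t) \<mu>). pmf (map_pmf (G t) \<mu>) \<gamma> * tv_dist p (u t \<gamma>)) \<le> sqrt (IWS t)"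
proof -
  let ?\<rho>1 = "map_pmf (G t) \<mu>"
  let ?\<sigma> = "map_pmf (\<lambda>\<omega>. (G t \<omega>, Sj t \<omega>)) \<mu>"
  let ?Q = "pair_pmf ?\<rho>1 p"
  define A where "A \<gamma> = {x. pmf p x < pmf (u t \<gamma>) x}" for \<gamma>
  define h where "h z = (indicator (A (fst z)) (snd z) :: real)" for z
  have fin1: "finite (set_pmf ?\<rho>1)" using finmu by simp
  have finu: "finite (set_pmf (u t \<gamma>))" if "\<gamma> \<in> set_pmf ?\<rho>1" for \<gamma>
    unfolding u_def using fin_cnd[OF that] by simp
  have dis: "?\<sigma> = bind_pmf ?\<rho>1 (\<lambda>\<gamma>. map_pmf (Pair \<gamma>) (u t \<gamma>))"
    unfolding u_def by (rule disint)
  have m1: "map_pmf fst ?\<sigma> = ?\<rho>1" by (simp add: map_pmf_comp)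
  have m2: "map_pmf snd ?\<sigma> = p" using law_Sj[OF tN] by (simp add: map_pmf_comp)
  have finS: "finite (set_pmf ?\<sigma>)" using finmu by simp
  have KLe: "KL ?\<sigma> ?Q = IWS t"
    using KL_pair[OF finS] m1 m2 unfolding IWS_def by simp
  have finQ: "finite (set_pmf ?Q)" using fin1 finp by simp
  have subQ: "set_pmf ?\<sigma> \<subseteq> set_pmf ?Q"
  proof
    fix z assume z: "z \<in> set_pmf ?\<sigma>"
    have "fst z \<in> set_pmf (map_pmf fst ?\<sigma>)" using z by (simp only: set_map_pmf) (rule imageI)
    then have "fst z \<in> set_pmf ?\<rho>1" unfolding m1 .
    moreover have "snd z \<in> set_pmf (map_pmf snd ?\<sigma>)" using z by (simp only: set_map_pmf) (rule imageI)
    then have "snd z \<in> set_pmf p" unfolding m2 .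
    ultimately show "z \<in> set_pmf ?Q" by (cases z) simp
  qed
  have T: "measure_pmf.expectation ?\<sigma> h - measure_pmf.expectation ?Q h \<le> sqrt (KL ?\<sigma> ?Q)"
    by (rule KL_test[OF finQ subQ]) (auto simp: h_def)
  have E1: "measure_pmf.expectation ?\<sigma> h = measure_pmf.expectation ?\<rho>1 (\<lambda>\<gamma>. measure_pmf.prob (u t \<gamma>) (A \<gamma>))"
  proof -
    have "measure_pmf.expectation ?\<sigma> h = measure_pmf.expectation ?\<rho>1 (\<lambda>\<gamma>. measure_pmf.expectation (map_pmf (Pair \<gamma>) (u t \<gamma>)) h)"
      unfolding dis by (rule expect_bind[OF fin1]) (simp add: finu)
    also have "\<dots> = measure_pmf.expectation ?\<rho>1 (\<lambda>\<gamma>. measure_pmf.prob (u t \<gamma>) (A \<gamma>))"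
      by (simp add: h_def)
    finally show ?thesis .
  qed
  have E2: "measure_pmf.expectation ?Q h = measure_pmf.expectation ?\<rho>1 (\<lambda>\<gamma>. measure_pmf.prob p (A \<gamma>))"
  proof -
    have "measure_pmf.expectation ?Q h = measure_pmf.expectation ?\<rho>1 (\<lambda>\<gamma>. measure_pmf.expectation (map_pmf (Pair \<gamma>) p) h)"
      unfolding pair_as_bind by (rule expect_bind[OF fin1]) (simp add: finp)
    also have "\<dots> = measure_pmf.expectation ?\<rho>1 (\<lambda>\<gamma>. measure_pmf.prob p (A \<gamma>))"
      by (simp add: h_def)
    finally show ?thesis .
  qed
  have "(\<Sum>\<gamma>\<in>set_pmf ?\<rho>1. pmf ?\<rho>1 \<gamma> * tv_dist p (u t \<gamma>))
      \<le> (\<Sum>\<gamma>\<in>set_pmf ?\<rho>1. pmf ?\<rho>1 \<gamma> * (measure_pmf.prob (u t \<gamma>) (A \<gamma>) - measure_pmf.prob p (A \<gamma>)))"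
    unfolding A_def by (intro sum_mono mult_left_mono tvd_le_A[OF finp] finu) auto
  also have "\<dots> = measure_pmf.expectation ?\<sigma> h - measure_pmf.expectation ?Q h"
    unfolding E1 E2 expect_sum[OF fin1] by (simp add: sum_subtractf algebra_simps)
  also have "\<dots> \<le> sqrt (IWS t)" using T KLe by simp
  finally show ?thesis .
qed

lemma per_gamma:
  fixes g :: "'z list \<Rightarrow> real" and \<eta> \<delta> :: real
  assumes TV: "\<And>D'. set_pmf D' \<subseteq> Z \<Longrightarrow> tv_dist p D' \<le> \<eta> \<Longrightarrow> 1 - \<delta> \<le> measure_pmf.expectation (replicate_pmf n D') g"
    and g0: "\<And>y. 0 \<le> g y" and g1: "\<And>y. g y \<le> 1"
    and k\<eta>: "real k \<le> \<eta> * m" and \<eta>0: "0 \<le> \<eta>" and tN: "t < N"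
    and g: "\<gamma> \<in> set_pmf (map_pmf (G t) \<mu>)"
  shows "1 - \<delta> - n * (tv_dist p (u t \<gamma>) + t / (m - t)) \<le> measure_pmf.expectation (replicate_pmf n (q t \<gamma>)) g"
proof -
  have tm: "t < m" using tN Nm by simp
  let ?c = "cnd \<mu> (G t) \<gamma>"
  let ?q = "q t \<gamma>" and ?u = "u t \<gamma>"
  define e where "e = measure_pmf.prob ?c {\<omega>. Sj t \<omega> \<noteq> Y t \<omega>}"
  have finc: "finite (set_pmf ?c)" by (rule fin_cnd[OF g])
  have finq: "finite (set_pmf ?q)" unfolding q_def using finc by simp
  have finu: "finite (set_pmf ?u)" unfolding u_def using finc by simp
  have qZ: "set_pmf ?q \<subseteq> Z"
    unfolding q_def using set_cnd[OF g] Y_in_Z tN by auto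
  have e_uq: "tv_dist ?u ?q \<le> e" unfolding u_def q_def e_def by (rule tvd_coupling)
  have e1: "e \<le> 1" unfolding e_def by simp
  have ek: "e \<le> k / (m - t)" unfolding e_def by (rule rho_bound[OF tN g])
  have e\<eta>: "e - \<eta> \<le> t / (m - t)"
  proof (cases "\<eta> \<ge> 1")
    case True then show ?thesis using e1 tm by (simp add: order_trans[of _ 0])
  next
    case False
    have "e \<le> \<eta> * m / (m - t)" using ek k\<eta> tm by (simp add: divide_right_mono order_trans)
    also have "\<eta> * m / (m - t) = \<eta> + \<eta> * t / (m - t)" using tm by (simp add: field_simps of_nat_diff)
    also have "\<eta> * t / (m - t) \<le> t / (m - t)"
    proof -
      have "\<eta> * real t \<le> 1 * real t" using False \<eta>0 by (intro mult_right_mono) auto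
      then show ?thesis using tm by (intro divide_right_mono) auto
    qed
    finally show ?thesis by simp
  qed
  define \<alpha> where "\<alpha> = tv_dist p ?q"
  have \<alpha>0: "0 \<le> \<alpha>" unfolding \<alpha>_def by (rule tvd_nonneg)
  have \<alpha>le: "\<alpha> \<le> tv_dist p ?u + e" unfolding \<alpha>_def using tvd_tri[of p ?q ?u] e_uq by simp
  define \<theta> where "\<theta> = (if \<alpha> \<le> \<eta> then 1 else \<eta> / \<alpha>)"
  have \<theta>01: "0 \<le> \<theta>" "\<theta> \<le> 1" unfolding \<theta>_def using \<eta>0 \<alpha>0 by auto
  define D' where "D' = mixp \<theta> ?q p"
  have D'Z: "set_pmf D' \<subseteq> Z" using set_mixp[of \<theta> ?q p] qZ pZ unfolding D'_def by blast
  have D'tv: "tv_dist p D' \<le> \<eta>"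
  proof -
    have "tv_dist p D' \<le> \<theta> * \<alpha>" unfolding D'_def \<alpha>_def by (rule tvd_mixp1[OF \<theta>01 finq finp])
    also have "\<theta> * \<alpha> \<le> \<eta>" unfolding \<theta>_def using \<alpha>0 \<eta>0 by auto
    finally show ?thesis .
  qed
  have D'q: "tv_dist D' ?q \<le> tv_dist p ?u + t / (m - t)"
  proof -
    have "tv_dist D' ?q \<le> (1 - \<theta>) * \<alpha>" unfolding D'_def \<alpha>_def by (rule tvd_mixp2[OF \<theta>01 finq finp])
    also have "(1 - \<theta>) * \<alpha> \<le> tv_dist p ?u + t / (m - t)"
    proof (cases "\<alpha> \<le> \<eta>")
      case True
      then show ?thesis unfolding \<theta>_def using tvd_nonneg[of p ?u] tm by simp
    next
      case False
      then have "\<alpha> \<noteq> 0" using \<eta>0 by auto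
      then have "(1 - \<theta>) * \<alpha> = \<alpha> - \<eta>" unfolding \<theta>_def using False by (simp add: field_simps)
      then show ?thesis using \<alpha>le e\<eta> by simp
    qed
    finally show ?thesis .
  qed
  have "1 - \<delta> \<le> measure_pmf.expectation (replicate_pmf n D') g" by (rule TV[OF D'Z D'tv])
  moreover have "measure_pmf.expectation (replicate_pmf n D') g - measure_pmf.expectation (replicate_pmf n ?q) g \<le> n * tv_dist D' ?q"
    by (rule rep_expect_diff) (use set_mixp[of \<theta> ?q p] finq finp g0 g1 in \<open>auto simp: D'_def intro: finite_subset\<close>)
  moreover have "n * tv_dist D' ?q \<le> n * (tv_dist p ?u + t / (m - t))"
    using D'q by (intro mult_left_mono) auto
  ultimately show ?thesis by simp
qed

lemma main_comb:
  fixes g :: "'z list \<Rightarrow> real" and \<eta> \<delta> :: real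
  assumes TV: "\<And>D'. set_pmf D' \<subseteq> Z \<Longrightarrow> tv_dist p D' \<le> \<eta> \<Longrightarrow> 1 - \<delta> \<le> measure_pmf.expectation (replicate_pmf n D') g"
    and g0: "\<And>y. 0 \<le> g y" and g1: "\<And>y. g y \<le> 1"
    and k\<eta>: "real k \<le> \<eta> * m" and \<eta>0: "0 \<le> \<eta>" and tn: "t + n < N"
  shows "1 - \<delta> - sqrt (n * (hh t - hh (t + n))) - n * sqrt (IWS t) - n * (t / (m - t))
     \<le> measure_pmf.expectation \<mu> (\<lambda>\<omega>. g (W t n \<omega>))"
proof -
  have tN: "t < N" using tn by simp
  let ?\<rho>1 = "map_pmf (G t) \<mu>"
  define \<nu> where "\<nu> = map_pmf (\<lambda>\<omega>. (G t \<omega>, W t n \<omega>)) \<mu>"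
  define \<nu>' where "\<nu>' = bind_pmf ?\<rho>1 (\<lambda>\<gamma>. map_pmf (Pair \<gamma>) (replicate_pmf n (q t \<gamma>)))"
  have fin1: "finite (set_pmf ?\<rho>1)" using finmu by simp
  have finq: "finite (set_pmf (q t \<gamma>))" if "\<gamma> \<in> set_pmf ?\<rho>1" for \<gamma>
    unfolding q_def using fin_cnd[OF that] by simp
  have finrep: "finite (set_pmf (replicate_pmf n (q t \<gamma>)))" if "\<gamma> \<in> set_pmf ?\<rho>1" for \<gamma>
    using finq[OF that] by (rule finite_rep)
  have fin': "finite (set_pmf \<nu>')" unfolding \<nu>'_def by (rule finite_bind_Pair[OF fin1]) (simp add: finrep)
  note KB = KL_bound[OF tn]
  have T: "measure_pmf.expectation \<nu>' (\<lambda>z. g (snd z)) - measure_pmf.expectation \<nu> (\<lambda>z. g (snd z)) \<le> sqrt (KL \<nu> \<nu>')"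
    by (rule KL_test2[OF fin']) (use KB(1) g0 g1 in \<open>auto simp: \<nu>_def \<nu>'_def\<close>)
  have KL: "sqrt (KL \<nu> \<nu>') \<le> sqrt (n * (hh t - hh (t + n)))"
    using KB(2) unfolding \<nu>_def \<nu>'_def by simp
  have Ev: "measure_pmf.expectation \<nu> (\<lambda>z. g (snd z)) = measure_pmf.expectation \<mu> (\<lambda>\<omega>. g (W t n \<omega>))"
    unfolding \<nu>_def by simp
  have Ev': "measure_pmf.expectation \<nu>' (\<lambda>z. g (snd z)) = (\<Sum>\<gamma>\<in>set_pmf ?\<rho>1. pmf ?\<rho>1 \<gamma> * measure_pmf.expectation (replicate_pmf n (q t \<gamma>)) g)"
  proof -
    have "measure_pmf.expectation \<nu>' (\<lambda>z. g (snd z)) = measure_pmf.expectation ?\<rho>1 (\<lambda>\<gamma>. measure_pmf.expectation (map_pmf (Pair \<gamma>) (replicate_pmf n (q t \<gamma>))) (\<lambda>z. g (snd z)))"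
      unfolding \<nu>'_def by (rule expect_bind[OF fin1]) (simp add: finrep)
    moreover have "\<And>\<gamma>. measure_pmf.expectation (map_pmf (Pair \<gamma>) (replicate_pmf n (q t \<gamma>))) (\<lambda>z. g (snd z)) = measure_pmf.expectation (replicate_pmf n (q t \<gamma>)) g"
      by simp
    ultimately show ?thesis by (simp only: expect_sum[OF fin1])
  qed
  have s1: "(\<Sum>\<gamma>\<in>set_pmf ?\<rho>1. pmf ?\<rho>1 \<gamma>) = 1" using sum_pmf_eq_1[OF fin1] by simp
  have X: "(\<Sum>\<gamma>\<in>set_pmf ?\<rho>1. pmf ?\<rho>1 \<gamma> * (1 - \<delta> - n * (t / (m - t)) - n * tv_dist p (u t \<gamma>)))
      \<le> (\<Sum>\<gamma>\<in>set_pmf ?\<rho>1. pmf ?\<rho>1 \<gamma> * measure_pmf.expectation (replicate_pmf n (q t \<gamma>)) g)"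
  proof (intro sum_mono mult_left_mono)
    fix \<gamma> assume g: "\<gamma> \<in> set_pmf ?\<rho>1"
    show "1 - \<delta> - n * (t / (m - t)) - n * tv_dist p (u t \<gamma>) \<le> measure_pmf.expectation (replicate_pmf n (q t \<gamma>)) g"
      using per_gamma[OF TV g0 g1 k\<eta> \<eta>0 tN g] by (simp add: algebra_simps)
  qed auto
  have Xe: "(\<Sum>\<gamma>\<in>set_pmf ?\<rho>1. pmf ?\<rho>1 \<gamma> * (1 - \<delta> - n * (t / (m - t)) - n * tv_dist p (u t \<gamma>)))
      = (1 - \<delta> - n * (t / (m - t))) - n * (\<Sum>\<gamma>\<in>set_pmf ?\<rho>1. pmf ?\<rho>1 \<gamma> * tv_dist p (u t \<gamma>))"
  proof -
    define a where "a = 1 - \<delta> - n * (t / (m - t))"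
    have "(\<Sum>\<gamma>\<in>set_pmf ?\<rho>1. pmf ?\<rho>1 \<gamma> * (a - n * tv_dist p (u t \<gamma>)))
       = (\<Sum>\<gamma>\<in>set_pmf ?\<rho>1. a * pmf ?\<rho>1 \<gamma>) - (\<Sum>\<gamma>\<in>set_pmf ?\<rho>1. n * (pmf ?\<rho>1 \<gamma> * tv_dist p (u t \<gamma>)))"
      by (simp add: sum_subtractf algebra_simps)
    also have "\<dots> = a - n * (\<Sum>\<gamma>\<in>set_pmf ?\<rho>1. pmf ?\<rho>1 \<gamma> * tv_dist p (u t \<gamma>))"
      by (simp only: sum_distrib_left[symmetric] s1 mult_1_right)
    finally show ?thesis unfolding a_def .
  qed
  have Sb: "n * (\<Sum>\<gamma>\<in>set_pmf ?\<rho>1. pmf ?\<rho>1 \<gamma> * tv_dist p (u t \<gamma>)) \<le> n * sqrt (IWS t)"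
    using tv_avg[OF tN] by (intro mult_left_mono) auto
  define Yv where "Yv = (\<Sum>\<gamma>\<in>set_pmf ?\<rho>1. pmf ?\<rho>1 \<gamma> * measure_pmf.expectation (replicate_pmf n (q t \<gamma>)) g)"
  define Sv where "Sv = (\<Sum>\<gamma>\<in>set_pmf ?\<rho>1. pmf ?\<rho>1 \<gamma> * tv_dist p (u t \<gamma>))"
  define a where "a = 1 - \<delta> - n * (t / (m - t))"
  have 1: "a - n * Sv \<le> Yv" unfolding Yv_def Sv_def a_def using X Xe by metis
  have 2: "a - n * sqrt (IWS t) \<le> Yv" using 1 Sb unfolding Sv_def by linarith
  have 3: "Yv - measure_pmf.expectation \<mu> (\<lambda>\<omega>. g (W t n \<omega>)) \<le> sqrt (n * (hh t - hh (t + n)))"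
    using T KL Ev Ev' unfolding Yv_def by linarith
  define c1 where "c1 = real n * (real t / real (m - t))"
  define c2 where "c2 = real n * sqrt (IWS t)"
  define c3 where "c3 = sqrt (real n * (hh t - hh (t + n)))"
  define EE where "EE = measure_pmf.expectation \<mu> (\<lambda>\<omega>. g (W t n \<omega>))"
  have h2: "1 - \<delta> - c1 - c2 \<le> Yv" using 2 unfolding a_def c1_def c2_def .
  have h3: "Yv - EE \<le> c3" using 3 unfolding EE_def c3_def .
  have "1 - \<delta> - c3 - c2 - c1 \<le> EE" using h2 h3 by linarith
  then show ?thesis unfolding c1_def c2_def c3_def EE_def .
qed

end

lemma numeric_T0:
  fixes n \<Lambda> d m :: real
  assumes n1: "1 \<le> n" and \<Lambda>: "1/2 \<le> \<Lambda>" and d0: "0 < d" and d1: "d < 1"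
    and mb: "1000 * n^4 * \<Lambda>^2 / d^4 \<le> m"
  shows "18 * n^2 * \<Lambda> / d^2 + 1 \<le> m"
proof -
  define T0 where "T0 = 18 * n^2 * \<Lambda> / d^2"
  have d2: "0 < d^2" "d^2 \<le> 1" using d0 d1 by (auto simp: power_le_one)
  have \<Lambda>0: "0 < \<Lambda>" using \<Lambda> by simp
  have T09: "9 \<le> T0"
  proof -
    have "18 * 1 * (1/2) \<le> 18 * n^2 * \<Lambda>" using n1 \<Lambda> by (intro mult_mono) (auto simp: one_le_power)
    then have "9 \<le> 18 * n^2 * \<Lambda>" by simp
    also have "\<dots> \<le> 18 * n^2 * \<Lambda> / d^2" using d2 \<Lambda>0 n1 by (simp add: le_divide_eq)
    finally show ?thesis unfolding T0_def .
  qed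
  have mT: "3 * T0^2 \<le> m"
  proof -
    have "T0^2 = 324 * n^4 * \<Lambda>^2 / d^4" unfolding T0_def by (simp add: power2_eq_square field_simps power4_eq_xxxx)
    then have "3 * T0^2 \<le> 1000 * n^4 * \<Lambda>^2 / d^4"
      using d2 by (simp add: divide_right_mono)
    then show ?thesis using mb by simp
  qed
  have "T0 * 1 \<le> T0 * T0" using T09 by (intro mult_left_mono) auto
  then have "3 * T0 \<le> m" using mT by (simp add: power2_eq_square)
  then have "T0 + 1 \<le> m" using T09 by linarith
  then show ?thesis unfolding T0_def .
qed

lemma numeric:
  fixes n \<Lambda> d m L t hd I :: real
  assumes n1: "1 \<le> n" and \<Lambda>: "1/2 \<le> \<Lambda>" and d0: "0 < d" and d1: "d < 1"
    and mb: "1000 * n^4 * \<Lambda>^2 / d^4 \<le> m"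
    and Lb: "16 * n * \<Lambda> / d^2 \<le> L"
    and tb: "t \<le> 18 * n^2 * \<Lambda> / d^2" and t0: "0 \<le> t"
    and hb: "hd \<le> \<Lambda> / L"
    and Ib: "I \<le> t * \<Lambda> / (m - t)"
  shows "t < m" "sqrt (n * hd) + n * sqrt I + n * (t / (m - t)) \<le> d"
proof -
  define T0 where "T0 = 18 * n^2 * \<Lambda> / d^2"
  have d2: "0 < d^2" "d^2 \<le> 1" using d0 d1 by (auto simp: power_le_one)
  have d2d: "d^2 \<le> d" using d0 d1 by (simp add: power2_eq_square mult_le_cancel_right1 less_imp_le)
  have \<Lambda>0: "0 < \<Lambda>" using \<Lambda> by simp
  have T09: "9 \<le> T0"
  proof -
    have "18 * 1 * (1/2) \<le> 18 * n^2 * \<Lambda>" using n1 \<Lambda> by (intro mult_mono) (auto simp: one_le_power)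
    then have "9 \<le> 18 * n^2 * \<Lambda>" by simp
    also have "\<dots> \<le> 18 * n^2 * \<Lambda> / d^2" using d2 \<Lambda>0 n1 by (simp add: le_divide_eq)
    finally show ?thesis unfolding T0_def .
  qed
  have mT: "3 * T0^2 \<le> m"
  proof -
    have "T0^2 = 324 * n^4 * \<Lambda>^2 / d^4" unfolding T0_def by (simp add: power2_eq_square field_simps power4_eq_xxxx)
    then have "3 * T0^2 \<le> 1000 * n^4 * \<Lambda>^2 / d^4"
      using d2 by (simp add: divide_right_mono)
    then show ?thesis using mb by simp
  qed
  have "T0 * 1 \<le> T0 * T0" using T09 by (intro mult_left_mono) auto
  then have T0m: "3 * T0 \<le> m" using mT by (simp add: power2_eq_square)
  have tm3: "t \<le> m / 3" using tb T0m unfolding T0_def by simp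
  have mpos: "0 < m" using T0m T09 by simp
  show tm: "t < m" using tm3 mpos by simp
  have mt: "2 * m / 3 \<le> m - t" using tm3 by simp
  have mtpos: "0 < m - t" using tm by simp
  have "0 < 16 * n * \<Lambda> / d^2" using n1 \<Lambda>0 d2 by (intro divide_pos_pos mult_pos_pos) auto
  then have L0: "0 < L" using Lb by linarith
  have B1: "sqrt (n * hd) \<le> d / 4"
  proof -
    have "n * hd \<le> n * (\<Lambda> / L)" using hb n1 by (intro mult_left_mono) auto
    also have "\<dots> \<le> n * (\<Lambda> / (16 * n * \<Lambda> / d^2))"
      using Lb n1 \<Lambda>0 d2 L0 by (intro mult_left_mono divide_left_mono) (auto intro!: mult_pos_pos divide_pos_pos)
    also have "\<dots> = d^2 / 16" using n1 \<Lambda>0 d2 by (simp add: field_simps)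
    finally have "n * hd \<le> (d / 4)^2" by (simp add: power_divide)
    then have "sqrt (n * hd) \<le> sqrt ((d/4)^2)" by (rule real_sqrt_le_mono)
    then show ?thesis using d0 by simp
  qed
  have B2: "n * sqrt I \<le> d / 4"
  proof -
    have "t * \<Lambda> / (m - t) \<le> T0 * \<Lambda> / (2 * m / 3)"
      using tb t0 \<Lambda>0 mt mtpos unfolding T0_def
      by (intro frac_le mult_right_mono) auto
    also have "\<dots> = 27 * n^2 * \<Lambda>^2 / (d^2 * m)" unfolding T0_def using mpos d2 by (simp add: field_simps power2_eq_square)
    finally have I1: "I \<le> 27 * n^2 * \<Lambda>^2 / (d^2 * m)" using Ib by simp
    have "n^2 * (27 * n^2 * \<Lambda>^2 / (d^2 * m)) = 27 * (n^4 * \<Lambda>^2 / d^4) * d^2 / m"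
      using mpos d2 by (simp add: field_simps power4_eq_xxxx power2_eq_square)
    also have "\<dots> \<le> 27 * (m / 1000) * d^2 / m"
    proof -
      have "n^4 * \<Lambda>^2 / d^4 \<le> m / 1000" using mb by (simp add: field_simps mult.commute mult.left_commute)
      then show ?thesis using mpos d2 by (intro divide_right_mono mult_right_mono mult_left_mono) auto
    qed
    also have "\<dots> = 27 / 1000 * d^2" using mpos by simp
    also have "\<dots> \<le> (d/4)^2" by (simp add: power_divide)
    finally have "n^2 * (27 * n^2 * \<Lambda>^2 / (d^2 * m)) \<le> (d/4)^2" .
    moreover have "n^2 * I \<le> n^2 * (27 * n^2 * \<Lambda>^2 / (d^2 * m))" using I1 by (intro mult_left_mono) auto
    ultimately have "n^2 * I \<le> (d/4)^2" by linarith
    then have "sqrt (n^2 * I) \<le> d / 4" using d0 by (metis real_sqrt_le_mono real_sqrt_abs abs_of_pos divide_pos_pos zero_less_numeral)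
    moreover have "sqrt (n^2 * I) = n * sqrt I" using n1 by (simp add: real_sqrt_mult)
    ultimately show ?thesis by simp
  qed
  have B3: "n * (t / (m - t)) \<le> d / 4"
  proof -
    have "t / (m - t) \<le> T0 / (2 * m / 3)"
      using tb t0 mt mtpos unfolding T0_def by (intro frac_le) auto
    also have "\<dots> = 27 * n^2 * \<Lambda> / (d^2 * m)" unfolding T0_def using mpos d2 by (simp add: field_simps)
    finally have "n * (t / (m - t)) \<le> n * (27 * n^2 * \<Lambda> / (d^2 * m))" using n1 by (intro mult_left_mono) auto
    also have "\<dots> = 27 * (n^4 * \<Lambda>^2 / d^4) * d^2 / (m * n * \<Lambda>)"
      using mpos d2 n1 \<Lambda>0 by (simp add: field_simps power4_eq_xxxx power2_eq_square)
    also have "\<dots> \<le> 27 * (m / 1000) * d^2 / (m * n * \<Lambda>)"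
    proof -
      have "n^4 * \<Lambda>^2 / d^4 \<le> m / 1000" using mb by (simp add: field_simps mult.commute mult.left_commute)
      then show ?thesis using mpos d2 n1 \<Lambda>0 by (intro divide_right_mono mult_right_mono mult_left_mono) auto
    qed
    also have "\<dots> = 27 / 1000 * d^2 / (n * \<Lambda>)" using mpos by (simp add: field_simps)
    also have "\<dots> \<le> 27 / 1000 * d^2 / (1/2)"
    proof -
      have "1 * (1/2) \<le> n * \<Lambda>" using n1 \<Lambda> by (intro mult_mono) auto
      then have "1/2 \<le> n * \<Lambda>" by simp
      then show ?thesis using d2 by (intro divide_left_mono) auto
    qed
    also have "\<dots> \<le> d / 4" using d2d d0 by simp
    finally show ?thesis .
  qed
  show "sqrt (n * hd) + n * sqrt I + n * (t / (m - t)) \<le> d" using B1 B2 B3 d0 by linarith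
qed

lemma prob_bind_pmf:
  "measure_pmf.prob (bind_pmf M f) X = measure_pmf.expectation M (\<lambda>x. measure_pmf.prob (f x) X)"
  unfolding measure_pmf_bind
  apply (rule measure_pmf.measure_bind[where N="count_space UNIV"])
   apply (auto simp: space_subprob_algebra measure_pmf.subprob_space_axioms intro!: measurable_count_space_eq1[THEN iffD2])
  done

lemma success_eq:
  "success_prob D c \<epsilon> S A = measure_pmf.expectation S (\<lambda>ys. measure_pmf.prob (A ys) {h. err D c h \<le> \<epsilon>})"
  unfolding success_prob_def by (rule prob_bind_pmf)

lemma ln2_ge: "1/2 \<le> ln (2::real)"
  by (metis ln_add1_ge one_add_one zero_le_one)

lemma subsample_dl: "subsample n S = map_pmf (\<lambda>is. map (\<lambda>i. S ! i) is) (pmf_of_set (dl (length S) n))"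
  unfolding subsample_def dl_def ..

theorem proposition4p10:
  "\<exists>K::real. K > 0 \<and>
    (\<forall>(X::nat set) (C::hypothesis set) (D::nat pmf) (n::nat) (A::algorithm)
        (\<epsilon>::real) (\<delta>::real) (\<eta>::real) (\<delta>\<^sub>a::real) (m::nat).
      finite X \<longrightarrow> set_pmf D \<subseteq> X \<longrightarrow> 0 \<le> \<eta> \<longrightarrow> \<delta>\<^sub>a > 0 \<longrightarrow>
      TV_learns X C D n A \<epsilon> \<delta> \<eta> \<longrightarrow>
      n \<le> m \<longrightarrow>
      real m \<ge> K * real n ^ 4 * ln (2 * real (card X)) ^ 2 / \<delta>\<^sub>a ^ 4 \<longrightarrow>
      nasty_learns X C D m (compose_subsample A n) \<epsilon> (\<delta> + \<delta>\<^sub>a) \<eta>)"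
proof (rule exI[of _ 1000], intro conjI allI impI)
  show "(0::real) < 1000" by simp
  fix X :: "nat set" and C :: "hypothesis set" and D :: "nat pmf" and n :: nat and A :: algorithm
    and \<epsilon> \<delta> \<eta> \<delta>a :: real and m :: nat
  assume finX: "finite X" and DX: "set_pmf D \<subseteq> X" and \<eta>0: "0 \<le> \<eta>" and da0: "\<delta>a > 0"
    and TVL: "TV_learns X C D n A \<epsilon> \<delta> \<eta>" and nm: "n \<le> m"
    and mbig: "1000 * real n ^ 4 * ln (2 * real (card X)) ^ 2 / \<delta>a ^ 4 \<le> real m"
  show "nasty_learns X C D m (compose_subsample A n) \<epsilon> (\<delta> + \<delta>a) \<eta>"
    unfolding nasty_learns_def
  proof (intro ballI allI impI)
    fix c adv assume cC: "c \<in> C" and NA: "nasty_adversary X D c \<eta> m adv"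
    define p where "p = labeled D c"
    define Z where "Z = X \<times> (UNIV :: bool set)"
    define g where "g ys = measure_pmf.prob (A ys) {h. err D c h \<le> \<epsilon>}" for ys
    have g0: "\<And>y. 0 \<le> g y" and g1: "\<And>y. g y \<le> 1" unfolding g_def by auto
    have finZ: "finite Z" unfolding Z_def using finX by simp
    have pZ: "set_pmf p \<subseteq> Z" unfolding p_def Z_def labeled_def using DX by auto
    have finp: "finite (set_pmf p)" using finite_subset[OF pZ finZ] .
    have TV: "\<And>D'. set_pmf D' \<subseteq> Z \<Longrightarrow> tv_dist p D' \<le> \<eta> \<Longrightarrow> 1 - \<delta> \<le> measure_pmf.expectation (replicate_pmf n D') g"
      using TVL cC unfolding TV_learns_def success_eq g_def p_def Z_def by blast
    have tvpp: "tv_dist p p \<le> \<eta>" using \<eta>0 by (intro tvd_le) simp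
    have Ep: "1 - \<delta> \<le> measure_pmf.expectation (replicate_pmf n p) g" by (rule TV[OF pZ tvpp])
    have Ep1: "measure_pmf.expectation (replicate_pmf n p) g \<le> 1"
      using expect_bounds(2)[OF finite_rep[OF finp] g0 g1] .
    have \<delta>0: "0 \<le> \<delta>" using Ep Ep1 by simp
    define succ where "succ = success_prob D c \<epsilon> (map_pmf adv (replicate_pmf m (labeled D c))) (compose_subsample A n)"
    have succ_eq: "succ = measure_pmf.expectation (replicate_pmf m p) (\<lambda>S. measure_pmf.expectation (subsample n (adv S)) g)"
      unfolding succ_def success_eq compose_subsample_def p_def g_def
      by (simp add: prob_bind_pmf)
    have succ0: "0 \<le> succ" unfolding succ_def success_prob_def by simp
    have advS: "\<And>S. S \<in> set_pmf (replicate_pmf m p) \<Longrightarrow> length (adv S) = m \<and> set (adv S) \<subseteq> Z \<and> card {i. i < m \<and> adv S ! i \<noteq> S ! i} \<le> nat \<lfloor>\<eta> * real m\<rfloor>"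
    proof -
      fix S assume S: "S \<in> set_pmf (replicate_pmf m p)"
      have NA': "length (adv S) = m \<and> set (adv S) \<subseteq> X \<times> UNIV \<and>
        (\<exists>I \<subseteq> {..<m}. card I = nat \<lfloor>\<eta> * real m\<rfloor> \<and> (\<forall>i<m. i \<notin> I \<longrightarrow> adv S ! i = S ! i))"
        using NA S unfolding nasty_adversary_def p_def by blast
      then obtain I where I: "I \<subseteq> {..<m}" "card I = nat \<lfloor>\<eta> * real m\<rfloor>" "\<forall>i<m. i \<notin> I \<longrightarrow> adv S ! i = S ! i" by blast
      have "{i. i < m \<and> adv S ! i \<noteq> S ! i} \<subseteq> I" using I(3) by auto
      then have "card {i. i < m \<and> adv S ! i \<noteq> S ! i} \<le> card I"
        using I(1) by (intro card_mono) (auto intro: finite_subset)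
      then show "length (adv S) = m \<and> set (adv S) \<subseteq> Z \<and> card {i. i < m \<and> adv S ! i \<noteq> S ! i} \<le> nat \<lfloor>\<eta> * real m\<rfloor>"
        using NA' I(2) unfolding Z_def by simp
    qed
    have "1 - (\<delta> + \<delta>a) \<le> succ"
    proof (cases "1 \<le> \<delta>a")
      case True
      then show ?thesis using succ0 \<delta>0 by simp
    next
      case False
      then have da1: "\<delta>a < 1" by simp
      show ?thesis
      proof (cases "n = 0")
        case True
        have sub0: "subsample 0 T = return_pmf []" for T :: "example list"
        proof -
          have "{is :: nat list. distinct is \<and> length is = 0 \<and> set is \<subseteq> {..<length T}} = {[]}" by auto
          then show ?thesis unfolding subsample_def by (simp add: pmf_of_set_singleton)
        qed
        have "succ = g []" unfolding succ_eq True sub0 by simp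
        moreover have "1 - \<delta> \<le> g []" using Ep True by simp
        ultimately show ?thesis using da0 by simp
      next
        case False
        then have n1: "1 \<le> n" by simp
        define k where "k = nat \<lfloor>\<eta> * real m\<rfloor>"
        have k\<eta>: "real k \<le> \<eta> * real m" unfolding k_def using \<eta>0 by simp
        have cX: "1 \<le> card X"
        proof -
          have "set_pmf D \<noteq> {}" by (simp add: set_pmf_not_empty)
          then have "X \<noteq> {}" using DX by blast
          then show ?thesis using finX by (simp add: Suc_le_eq card_gt_0_iff)
        qed
        have cZ: "card Z = 2 * card X" unfolding Z_def using finX by (simp add: card_cartesian_product)
        define \<Lambda> where "\<Lambda> = ln (real (card Z))"
        have \<Lambda>eq: "\<Lambda> = ln (2 * real (card X))" unfolding \<Lambda>_def cZ by simp
        have \<Lambda>1: "1/2 \<le> \<Lambda>"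
        proof -
          have "ln 2 \<le> ln (2 * real (card X))" using cX by simp
          then show ?thesis using ln2_ge \<Lambda>eq by simp
        qed
        define L where "L = nat \<lceil>16 * real n * \<Lambda> / \<delta>a^2\<rceil>"
        have Lge: "16 * real n * \<Lambda> / \<delta>a^2 \<le> real L" unfolding L_def by linarith
        have Lpos: "0 < 16 * real n * \<Lambda> / \<delta>a^2" using n1 \<Lambda>1 da0 by (intro divide_pos_pos mult_pos_pos) auto
        have Lle: "real L \<le> 16 * real n * \<Lambda> / \<delta>a^2 + 1" unfolding L_def using Lpos by linarith
        have L0: "0 < L" using Lge Lpos by simp
        define T0 where "T0 = 18 * real n ^ 2 * \<Lambda> / \<delta>a^2"
        have hn: "real n \<le> 2 * real n ^ 2 * \<Lambda> / \<delta>a^2"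
        proof -
          have d2: "0 < \<delta>a^2" "\<delta>a^2 \<le> 1" using da0 da1 by (auto simp: power_le_one)
          have "real n * 1 \<le> real n ^ 2 * (2 * \<Lambda>)" using n1 \<Lambda>1
            by (intro mult_mono) (auto simp: power2_eq_square)
          also have "\<dots> \<le> real n ^ 2 * (2 * \<Lambda>) / \<delta>a^2"
          proof -
            have x0: "0 \<le> real n ^ 2 * (2 * \<Lambda>)" using \<Lambda>1 by simp
            have "real n ^ 2 * (2 * \<Lambda>) * \<delta>a^2 \<le> real n ^ 2 * (2 * \<Lambda>)" using x0 d2 by (intro mult_left_le) auto
            then show ?thesis by (subst pos_le_divide_eq[OF d2(1)])
          qed
          finally show ?thesis by (simp add: algebra_simps)
        qed
        have LnT: "real (L * n) \<le> T0"
        proof -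
          have "real (L * n) = real L * real n" by simp
          also have "\<dots> \<le> (16 * real n * \<Lambda> / \<delta>a^2 + 1) * real n" using Lle by (intro mult_right_mono) auto
          also have "\<dots> = 16 * real n ^ 2 * \<Lambda> / \<delta>a^2 + real n" by (simp add: algebra_simps power2_eq_square)
          finally have "real (L * n) \<le> 16 * real n ^ 2 * \<Lambda> / \<delta>a^2 + real n" .
          then have "real (L * n) \<le> 16 * real n ^ 2 * \<Lambda> / \<delta>a^2 + 2 * real n ^ 2 * \<Lambda> / \<delta>a^2" using hn by linarith
          also have "\<dots> = T0" unfolding T0_def by (simp add: field_simps)
          finally show ?thesis .
        qed
        have mb': "1000 * real n ^ 4 * \<Lambda> ^ 2 / \<delta>a ^ 4 \<le> real m" using mbig \<Lambda>eq by simp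
        have Nm: "L * n + 1 \<le> m"
        proof -
          have "T0 + 1 \<le> real m" unfolding T0_def by (rule numeric_T0[OF _ \<Lambda>1 da0 da1 mb']) (use n1 in simp)
          then have "real (L * n) + 1 \<le> real m" using LnT by simp
          then show ?thesis by linarith
        qed
        define N where "N = L * n + 1"
        interpret S: setting p Z adv m k N
        proof
          show "finite Z" by (rule finZ)
          show "set_pmf p \<subseteq> Z" by (rule pZ)
          show "N \<le> m" unfolding N_def by (rule Nm)
          fix S assume "S \<in> set_pmf (replicate_pmf m p)"
          then show "length (adv S) = m \<and> set (adv S) \<subseteq> Z \<and> card {i. i < m \<and> adv S ! i \<noteq> S ! i} \<le> k"
            unfolding k_def by (rule advS)
        qed
        obtain j where j: "j < L" "S.hh (j * n) - S.hh (j * n + n) \<le> ln (card Z) / L"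
          using S.block[OF L0, of n] unfolding N_def by auto
        define t where "t = j * n"
        have tLn: "t + n \<le> L * n"
        proof -
          have "Suc j * n \<le> L * n" using j(1) by (intro mult_le_mono1) simp
          then show ?thesis unfolding t_def by simp
        qed
        have tn: "t + n < N" unfolding N_def using tLn by simp
        have tN: "t < N" using tn by simp
        have tm: "t < m" using tN Nm unfolding N_def by simp
        have mc: "1 - \<delta> - sqrt (n * (S.hh t - S.hh (t + n))) - n * sqrt (S.IWS t) - n * (t / (m - t))
            \<le> measure_pmf.expectation S.\<mu> (\<lambda>\<omega>. g (S.W t n \<omega>))"
          by (rule S.main_comb[OF TV g0 g1 k\<eta> \<eta>0 tn])
        have IW: "S.IWS t \<le> t * ln (card Z) / (m - t)" by (rule S.IWS_bound[OF tN])
        have "real t \<le> real (L * n)" using tLn by (simp only: of_nat_le_iff)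
        then have tb: "real t \<le> 18 * real n ^ 2 * \<Lambda> / \<delta>a^2" using LnT unfolding T0_def by linarith
        have hb: "S.hh t - S.hh (t + n) \<le> \<Lambda> / real L" using j(2) unfolding t_def \<Lambda>_def by simp
        have mtr: "real (m - t) = real m - real t" using tm by (simp add: of_nat_diff)
        have Ib: "S.IWS t \<le> real t * \<Lambda> / (real m - real t)" using IW mtr unfolding \<Lambda>_def by simp
        have num: "sqrt (real n * (S.hh t - S.hh (t + n))) + real n * sqrt (S.IWS t) + real n * (real t / (real m - real t)) \<le> \<delta>a"
          using numeric(2)[OF _ \<Lambda>1 da0 da1 mb' Lge tb _ hb Ib] n1 by simp
        have succ_mu: "succ = measure_pmf.expectation S.\<mu> (\<lambda>\<omega>. g (S.W t n \<omega>))"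
        proof -
          have "measure_pmf.expectation S.\<mu> (\<lambda>\<omega>. g (S.W t n \<omega>))
              = measure_pmf.expectation (replicate_pmf m p) (\<lambda>S. measure_pmf.expectation (map_pmf (Pair S) (pmf_of_set (dl m N))) (\<lambda>\<omega>. g (S.W t n \<omega>)))"
            unfolding S.\<mu>_def pair_as_bind by (rule expect_bind[OF S.finA]) (simp add: S.finU)
          also have "\<dots> = measure_pmf.expectation (replicate_pmf m p) (\<lambda>S. measure_pmf.expectation (subsample n (adv S)) g)"
          proof (rule integral_cong_AE)
            show "AE S in measure_pmf (replicate_pmf m p). measure_pmf.expectation (map_pmf (Pair S) (pmf_of_set (dl m N))) (\<lambda>\<omega>. g (S.W t n \<omega>))
                 = measure_pmf.expectation (subsample n (adv S)) g"
            proof (rule AE_pmfI)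
              fix S assume S: "S \<in> set_pmf (replicate_pmf m p)"
              have len: "length (adv S) = m" using advS[OF S] by simp
              have "subsample n (adv S) = map_pmf (\<lambda>is. map (\<lambda>i. adv S ! i) is) (pmf_of_set (dl m n))"
                unfolding subsample_dl len ..
              also have "\<dots> = map_pmf (\<lambda>is. map (\<lambda>i. adv S ! i) is) (map_pmf (\<lambda>\<pi>. take n (drop t \<pi>)) (pmf_of_set (dl m N)))"
                using map_window_U[of t n N m] tn Nm unfolding N_def by simp
              finally have "subsample n (adv S) = map_pmf (\<lambda>\<pi>. S.W t n (S, \<pi>)) (pmf_of_set (dl m N))"
                unfolding map_pmf_comp S.W_def by simp
              then show "measure_pmf.expectation (map_pmf (Pair S) (pmf_of_set (dl m N))) (\<lambda>\<omega>. g (S.W t n \<omega>))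
                 = measure_pmf.expectation (subsample n (adv S)) g" by simp
            qed
          qed simp_all
          finally show ?thesis using succ_eq by simp
        qed
        define a1 where "a1 = sqrt (real n * (S.hh t - S.hh (t + n)))"
        define a2 where "a2 = real n * sqrt (S.IWS t)"
        define a3 where "a3 = real n * (real t / (real m - real t))"
        have mc': "1 - \<delta> - a1 - a2 - a3 \<le> succ"
          using mc unfolding succ_mu[symmetric] mtr a1_def a2_def a3_def .
        have num': "a1 + a2 + a3 \<le> \<delta>a" using num unfolding a1_def a2_def a3_def .
        show ?thesis using mc' num' by linarith
      qed
    qed
    then show "1 - (\<delta> + \<delta>a) \<le> success_prob D c \<epsilon> (map_pmf adv (replicate_pmf m (labeled D c))) (compose_subsample A n)"
      unfolding succ_def .
  qed
qed

end
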